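(* Suppose Assumption 1 (multi-group version) holds, $\mathcal{G}_s\neq\emptyset$, $G$ is independent of $T$, and $P(G^*=1)>0$, $P(G^*=-1)>0$; assume all conditional expectations below are well defined and finite. Then: 1. If Assumptions 3 and 4 (multi-group versions) hold, $w_{10}W^*_{DID}(1,0)+(1-w_{10})W^*_{DID}(-1,0)=\Delta^*$. 2. If Assumption 3' (multi-group version) holds, $w_{10}W^*_{TC}(1)+(1-w_{10})W^*_{TC}(-1)=\Delta^*$. 3. If Assumptions 6 and 7 (multi-group versions) hold, $w_{10}W^*_{CIC}(1)+(1-w_{10})W^*_{CIC}(-1)=\Delta^*$.
   Context: Multi-group framework. Let $(Y(0),Y(1),V,G,T)$ be random variables with $G\in\{0,1,\dots,\bar g\}$, $T\in\{0,1\}$, $V$ real, and real constants $(v_{gt})$. Treatment $D=1\{V\geq v_{GT}\}$, potential treatments $D(t)=1\{V\geq v_{Gt}\}$, observed outcome $Y=DY(1)+(1-D)Y(0)$. For a random variable $R$, $R_{gt}$ is distributed as $R$ given $G=g,T=t$, $R_{dgt}$ as $R$ given $D=d,G=g,T=t$; $F_R$ denotes cdfs and $F^{-1}(q)=\inf\{x:F(x)\ge q\}$. Assumption 1: $D=1\{V\geq v_{GT}\}$, $V$ independent of $T$ given $G$. Assumption 3: $E(Y(0)\mid G,T=1)-E(Y(0)\mid G,T=0)$ does not depend on $G$. Assumption 4: $E(Y(1)-Y(0)\mid G,T=1,D(0)=1)=E(Y(1)-Y(0)\mid G,T=0,D(0)=1)$. Assumption 3': for $d\in\{0,1\}$, $E(Y(d)\mid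 G,T=1,D(0)=d)-E(Y(d)\mid G,T=0,D(0)=d)$ does not depend on $G$. Assumption 6: for $d\in\{0,1\}$, $Y(d)=h_d(U_d,T)$, $U_d$ real, $h_d(\cdot,t)$ strictly increasing for each $t$, and $U_d$ independent of $T$ given $(G,D(0))$. Assumption 7: $\mathrm{Supp}(Y_{dgt})=\mathrm{Supp}(Y)$ for all $(d,g,t)$ in the support of $(D,G,T)$, $\mathrm{Supp}(Y)$ a closed interval, and each $F_{Y_{dgt}}$ continuous on $\mathbb{R}$ and strictly increasing on $\mathrm{Supp}(Y)$. Define $S_g=\{D(0)\neq D(1),G=g\}$, $S^*=\bigcup_{g=0}^{\bar g}S_g$, $\Delta^*=E(Y(1)-Y(0)\mid S^*,T=1)$; $\mathcal{G}_s=\{g:E(D_{g1})=E(D_{g0})\}$, $\mathcal{G}_i=\{g:E(D_{g1})>E(D_{g0})\}$, $\mathcal{G}_d=\{g:E(D_{g1})<E(D_{g0})\}$; $G^*=1\{G\in\mathcal{G}_i\}-1\{G\in\mathcal{G}_d\}$. For a random variable $R$, $g\ne g'\in\{-1,0,1\}$, $d\in\{0,1\}$: $DID^*_R(g,g')=E(R\mid G^*=g,T=1)-E(R\mid G^*=g,T=0)-\big(E(R\mid G^*=g',T=1)-E(R\mid G^*=g',T=0)\big)$; $\delta^*_d=E(Y\mid D=d,G^*=0,T=1)-E(Y\mid D=d,G^*=0,T=0)$; $Q^*_d=F^{-1}_{Y\mid D=d,G^*=0,T=1}\circ F_{Y\mid D=d,G^*=0,T=0}$; $W^*_{DID}(g,g')=DID^*_Y(g,g')/DID^*_D(g,g')$;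 $W^*_{TC}(g)=\dfrac{E(Y\mid G^*=g,T=1)-E(Y+\delta^*_D\mid G^*=g,T=0)}{E(D\mid G^*=g,T=1)-E(D\mid G^*=g,T=0)}$; $W^*_{CIC}(g)=\dfrac{E(Y\mid G^*=g,T=1)-E(Q^*_D(Y)\mid G^*=g,T=0)}{E(D\mid G^*=g,T=1)-E(D\mid G^*=g,T=0)}$; $w_{10}=\dfrac{DID^*_D(1,0)P(G^*=1)}{DID^*_D(1,0)P(G^*=1)+DID^*_D(0,-1)P(G^*=-1)}$. *)

theory Defs
  imports "HOL-Probability.Probability"
begin

text \<open>Events, conditional expectations, conditional cdfs, quantile inverses and supports
 given conditioning events (all conditioning events are discrete and are assumed to have
 positive probability where the paper needs them).\<close>

definition evt :: "'a measure \<Rightarrow> ('a \<Rightarrow> bool) \<Rightarrow> 'a set" where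
  "evt M P = {\<omega> \<in> space M. P \<omega>}"

definition cexp :: "'a measure \<Rightarrow> 'a set \<Rightarrow> ('a \<Rightarrow> real) \<Rightarrow> real" where
  "cexp M A X = integral\<^sup>L M (\<lambda>\<omega>. indicator A \<omega> * X \<omega>) / measure M A"

definition ccdf :: "'a measure \<Rightarrow> 'a set \<Rightarrow> ('a \<Rightarrow> real) \<Rightarrow> real \<Rightarrow> real" where
  "ccdf M A Y y = measure M {\<omega> \<in> A. Y \<omega> \<le> y} / measure M A"

definition qinv :: "(real \<Rightarrow> real) \<Rightarrow> real \<Rightarrow> real" where
  "qinv F q = Inf {x. q \<le> F x}"

definition csupp :: "'a measure \<Rightarrow> 'a set \<Rightarrow> ('a \<Rightarrow> real) \<Rightarrow> real set" where
  "csupp M A Y = {y. \<forall>e>0. 0 < measure M {\<omega> \<in> A. dist (Y \<omega>) y < e}}"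

definition treat :: "(nat \<Rightarrow> nat \<Rightarrow> real) \<Rightarrow> ('a \<Rightarrow> real) \<Rightarrow> ('a \<Rightarrow> nat) \<Rightarrow> nat \<Rightarrow> 'a \<Rightarrow> real" where
  "treat v V G t \<omega> = (if v (G \<omega>) t \<le> V \<omega> then 1 else 0)"

definition dobs :: "(nat \<Rightarrow> nat \<Rightarrow> real) \<Rightarrow> ('a \<Rightarrow> real) \<Rightarrow> ('a \<Rightarrow> nat) \<Rightarrow> ('a \<Rightarrow> nat) \<Rightarrow> 'a \<Rightarrow> real" where
  "dobs v V G T \<omega> = treat v V G (T \<omega>) \<omega>"

definition yobs :: "('a \<Rightarrow> real) \<Rightarrow> ('a \<Rightarrow> real) \<Rightarrow> ('a \<Rightarrow> real) \<Rightarrow> 'a \<Rightarrow> real" where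
  "yobs D Y0 Y1 \<omega> = D \<omega> * Y1 \<omega> + (1 - D \<omega>) * Y0 \<omega>"

definition EDgt :: "'a measure \<Rightarrow> ('a \<Rightarrow> real) \<Rightarrow> ('a \<Rightarrow> nat) \<Rightarrow> ('a \<Rightarrow> nat) \<Rightarrow> nat \<Rightarrow> nat \<Rightarrow> real" where
  "EDgt M D G T g t = cexp M (evt M (\<lambda>\<omega>. G \<omega> = g \<and> T \<omega> = t)) D"

definition gstar :: "'a measure \<Rightarrow> ('a \<Rightarrow> real) \<Rightarrow> ('a \<Rightarrow> nat) \<Rightarrow> ('a \<Rightarrow> nat) \<Rightarrow> 'a \<Rightarrow> int" where
  "gstar M D G T \<omega> =
     (if EDgt M D G T (G \<omega>) 1 > EDgt M D G T (G \<omega>) 0 then 1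
      else if EDgt M D G T (G \<omega>) 1 < EDgt M D G T (G \<omega>) 0 then -1 else 0)"

definition cexpGs :: "'a measure \<Rightarrow> ('a \<Rightarrow> int) \<Rightarrow> ('a \<Rightarrow> nat) \<Rightarrow> ('a \<Rightarrow> real) \<Rightarrow> int \<Rightarrow> nat \<Rightarrow> real" where
  "cexpGs M Gs T R g t = cexp M (evt M (\<lambda>\<omega>. Gs \<omega> = g \<and> T \<omega> = t)) R"

definition DIDs :: "'a measure \<Rightarrow> ('a \<Rightarrow> int) \<Rightarrow> ('a \<Rightarrow> nat) \<Rightarrow> ('a \<Rightarrow> real) \<Rightarrow> int \<Rightarrow> int \<Rightarrow> real" where
  "DIDs M Gs T R g g' =
     cexpGs M Gs T R g 1 - cexpGs M Gs T R g 0 - (cexpGs M Gs T R g' 1 - cexpGs M Gs T R g' 0)"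

definition cell0 :: "'a measure \<Rightarrow> ('a \<Rightarrow> real) \<Rightarrow> ('a \<Rightarrow> int) \<Rightarrow> ('a \<Rightarrow> nat) \<Rightarrow> real \<Rightarrow> nat \<Rightarrow> 'a set" where
  "cell0 M D Gs T d t = evt M (\<lambda>\<omega>. D \<omega> = d \<and> Gs \<omega> = 0 \<and> T \<omega> = t)"

definition deltas :: "'a measure \<Rightarrow> ('a \<Rightarrow> real) \<Rightarrow> ('a \<Rightarrow> int) \<Rightarrow> ('a \<Rightarrow> nat) \<Rightarrow> ('a \<Rightarrow> real) \<Rightarrow> real \<Rightarrow> real" where
  "deltas M D Gs T Y d = cexp M (cell0 M D Gs T d 1) Y - cexp M (cell0 M D Gs T d 0) Y"

definition Qs :: "'a measure \<Rightarrow> ('a \<Rightarrow> real) \<Rightarrow> ('a \<Rightarrow> int) \<Rightarrow> ('a \<Rightarrow> nat) \<Rightarrow> ('a \<Rightarrow> real) \<Rightarrow> real \<Rightarrow> real \<Rightarrow> real" where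
  "Qs M D Gs T Y d = qinv (ccdf M (cell0 M D Gs T d 1) Y) \<circ> ccdf M (cell0 M D Gs T d 0) Y"

definition W_DID :: "'a measure \<Rightarrow> ('a \<Rightarrow> real) \<Rightarrow> ('a \<Rightarrow> int) \<Rightarrow> ('a \<Rightarrow> nat) \<Rightarrow> ('a \<Rightarrow> real) \<Rightarrow> int \<Rightarrow> int \<Rightarrow> real" where
  "W_DID M D Gs T Y g g' = DIDs M Gs T Y g g' / DIDs M Gs T D g g'"

definition W_TC :: "'a measure \<Rightarrow> ('a \<Rightarrow> real) \<Rightarrow> ('a \<Rightarrow> int) \<Rightarrow> ('a \<Rightarrow> nat) \<Rightarrow> ('a \<Rightarrow> real) \<Rightarrow> int \<Rightarrow> real" where
  "W_TC M D Gs T Y g =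
     (cexpGs M Gs T Y g 1 - cexpGs M Gs T (\<lambda>\<omega>. Y \<omega> + deltas M D Gs T Y (D \<omega>)) g 0)
     / (cexpGs M Gs T D g 1 - cexpGs M Gs T D g 0)"

definition W_CIC :: "'a measure \<Rightarrow> ('a \<Rightarrow> real) \<Rightarrow> ('a \<Rightarrow> int) \<Rightarrow> ('a \<Rightarrow> nat) \<Rightarrow> ('a \<Rightarrow> real) \<Rightarrow> int \<Rightarrow> real" where
  "W_CIC M D Gs T Y g =
     (cexpGs M Gs T Y g 1 - cexpGs M Gs T (\<lambda>\<omega>. Qs M D Gs T Y (D \<omega>) (Y \<omega>)) g 0)
     / (cexpGs M Gs T D g 1 - cexpGs M Gs T D g 0)"

definition w10 :: "'a measure \<Rightarrow> ('a \<Rightarrow> real) \<Rightarrow> ('a \<Rightarrow> int) \<Rightarrow> ('a \<Rightarrow> nat) \<Rightarrow> real" where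
  "w10 M D Gs T =
     DIDs M Gs T D 1 0 * measure M (evt M (\<lambda>\<omega>. Gs \<omega> = 1))
     / (DIDs M Gs T D 1 0 * measure M (evt M (\<lambda>\<omega>. Gs \<omega> = 1))
        + DIDs M Gs T D 0 (-1) * measure M (evt M (\<lambda>\<omega>. Gs \<omega> = -1)))"

end

theory Submission
  imports Defs
begin


lemma evt_sets[intro]: "Measurable.pred M P \<Longrightarrow> evt M P \<in> sets M"
  unfolding evt_def by measurable

definition Ion :: "'a measure \<Rightarrow> 'a set \<Rightarrow> ('a \<Rightarrow> real) \<Rightarrow> real" where
  "Ion M A X = (\<integral>\<omega>. indicator A \<omega> * X \<omega> \<partial>M)"

context prob_space begin

lemma Ion_integrable: "A \<in> sets M \<Longrightarrow> integrable M (X::'a\<Rightarrow>real) \<Longrightarrow> integrable M (\<lambda>\<omega>. indicator A \<omega> * X \<omega>)"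
  using integrable_real_mult_indicator[of A M X] by (simp add: mult.commute)

lemma Ion_null: assumes "A \<in> sets M" "prob A = 0" shows "Ion M A X = 0"
proof -
  have "A \<in> null_sets M" using assms by (simp add: null_sets_def emeasure_eq_measure)
  then have "AE \<omega> in M. \<omega> \<notin> A" by (rule AE_not_in)
  then have "AE \<omega> in M. indicator A \<omega> * X \<omega> = 0" by eventually_elim auto
  then show ?thesis unfolding Ion_def by (rule integral_eq_zero_AE)
qed

lemma cexp_Ion: assumes "A \<in> sets M" shows "Ion M A X = cexp M A X * prob A"
proof (cases "prob A = 0")
  case True then show ?thesis using Ion_null[OF assms] by simp
next
  case False then show ?thesis by (simp add: cexp_def Ion_def)
qed

lemma Ion_add: assumes "integrable M (\<lambda>\<omega>. indicator A \<omega> * X \<omega>)" "integrable M (\<lambda>\<omega>. indicator A \<omega> * X' \<omega>)"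
  shows "Ion M A (\<lambda>\<omega>. X \<omega> + X' \<omega>) = Ion M A X + Ion M A X'"
  unfolding Ion_def using assms by (simp add: distrib_left)

lemma Ion_diff: assumes "integrable M (\<lambda>\<omega>. indicator A \<omega> * X \<omega>)" "integrable M (\<lambda>\<omega>. indicator A \<omega> * X' \<omega>)"
  shows "Ion M A (\<lambda>\<omega>. X \<omega> - X' \<omega>) = Ion M A X - Ion M A X'"
  unfolding Ion_def using assms by (simp add: right_diff_distrib)

lemma Ion_cmult: "Ion M A (\<lambda>\<omega>. c * X \<omega>) = c * Ion M A X"
  unfolding Ion_def by (simp add: mult.left_commute)

lemma Ion_cong: "(\<And>\<omega>. \<omega> \<in> space M \<Longrightarrow> \<omega> \<in> A \<Longrightarrow> X \<omega> = X' \<omega>) \<Longrightarrow> Ion M A X = Ion M A X'"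
  unfolding Ion_def by (rule Bochner_Integration.integral_cong) (auto simp: indicator_def)

lemma Ion_cong2: "(\<And>\<omega>. \<omega> \<in> space M \<Longrightarrow> indicator A \<omega> * X \<omega> = indicator B \<omega> * X' \<omega>) \<Longrightarrow> Ion M A X = Ion M B X'"
  unfolding Ion_def by (rule Bochner_Integration.integral_cong) auto

lemma Ion_AE_cong: assumes "(\<lambda>\<omega>. indicator A \<omega> * X \<omega>) \<in> borel_measurable M" "(\<lambda>\<omega>. indicator B \<omega> * X' \<omega>) \<in> borel_measurable M"
   and "N \<in> null_sets M" "\<And>\<omega>. \<omega> \<in> space M \<Longrightarrow> \<omega> \<notin> N \<Longrightarrow> indicator A \<omega> * X \<omega> = indicator B \<omega> * X' \<omega>"
  shows "Ion M A X = Ion M B X'"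
proof -
  have "AE \<omega> in M. \<omega> \<notin> N" using assms(3) by (rule AE_not_in)
  then have "AE \<omega> in M. indicator A \<omega> * X \<omega> = indicator B \<omega> * X' \<omega>"
    using AE_space by eventually_elim (use assms(4) in auto)
  then show ?thesis unfolding Ion_def using assms(1,2) by (intro integral_cong_AE) auto
qed

lemma Ion_sum: assumes "finite I" "disjoint_family_on A I"
    "\<And>i. i \<in> I \<Longrightarrow> integrable M (\<lambda>\<omega>. indicator (A i) \<omega> * X \<omega>)"
  shows "Ion M (\<Union>i\<in>I. A i) X = (\<Sum>i\<in>I. Ion M (A i) X)"
proof -
  have "Ion M (\<Union>i\<in>I. A i) X = (\<integral>\<omega>. (\<Sum>i\<in>I. indicator (A i) \<omega> * X \<omega>) \<partial>M)"
    unfolding Ion_def using assms(1,2) by (simp add: indicator_UN_disjoint sum_distrib_right)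
  also have "\<dots> = (\<Sum>i\<in>I. Ion M (A i) X)"
    unfolding Ion_def using Bochner_Integration.integral_sum[where f="\<lambda>i \<omega>. indicator (A i) \<omega> * X \<omega>" and I=I] assms(3) by simp
  finally show ?thesis .
qed

lemma Ion_one: "A \<in> sets M \<Longrightarrow> Ion M A (\<lambda>_. 1) = prob A"
  unfolding Ion_def by simp

lemma Ion_ind: "A \<in> sets M \<Longrightarrow> B \<in> sets M \<Longrightarrow> Ion M A (indicator B) = prob (A \<inter> B)"
  unfolding Ion_def by (simp add: indicator_inter_arith[symmetric] Int_absorb2 sets.sets_into_space)


lemma Ion_un2: assumes "A \<inter> B = {}" "integrable M (\<lambda>\<omega>. indicator A \<omega> * X \<omega>)" "integrable M (\<lambda>\<omega>. indicator B \<omega> * X \<omega>)"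
  shows "Ion M (A \<union> B) X = Ion M A X + Ion M B X"
proof -
  have "Ion M (A \<union> B) X = (\<integral>\<omega>. indicator A \<omega> * X \<omega> + indicator B \<omega> * X \<omega> \<partial>M)"
    unfolding Ion_def using assms(1) by (simp add: indicator_union_arith indicator_inter_arith[symmetric] distrib_right)
  then show ?thesis unfolding Ion_def using assms(2,3) by simp
qed

lemma csupp_AE: assumes Y: "Y \<in> borel_measurable M" and A: "A \<in> sets M"
  shows "AE \<omega> in M. \<omega> \<in> A \<longrightarrow> Y \<omega> \<in> csupp M A Y"
proof -
  have "\<forall>y\<in>- csupp M A Y. \<exists>e>0. prob {\<omega> \<in> A. dist (Y \<omega>) y < e} = 0"
  proof
    fix y assume "y \<in> - csupp M A Y"
    then obtain e where e: "e > 0" "\<not> 0 < prob {\<omega> \<in> A. dist (Y \<omega>) y < e}" by (auto simp: csupp_def)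
    then show "\<exists>e>0. prob {\<omega> \<in> A. dist (Y \<omega>) y < e} = 0"
      using measure_nonneg[of M "{\<omega> \<in> A. dist (Y \<omega>) y < e}"] by (intro exI[of _ e]) auto
  qed
  then obtain e where e: "\<And>y. y \<in> - csupp M A Y \<Longrightarrow> 0 < e y \<and> prob {\<omega> \<in> A. dist (Y \<omega>) y < e y} = 0"
    by metis
  let ?F = "(\<lambda>y. ball y (e y)) ` (- csupp M A Y)"
  obtain F' where F': "F' \<subseteq> ?F" "countable F'" "\<Union>F' = \<Union>?F"
    by (rule Lindelof[of ?F]) auto
  let ?N = "\<lambda>B. {\<omega> \<in> space M. \<omega> \<in> A \<and> Y \<omega> \<in> B}"
  have null: "?N B \<in> null_sets M" if "B \<in> F'" for B
  proof -
    obtain y where y: "y \<in> - csupp M A Y" "B = ball y (e y)" using F'(1) \<open>B \<in> F'\<close> by auto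
    have eq: "?N B = {\<omega> \<in> A. dist (Y \<omega>) y < e y}"
      using sets.sets_into_space[OF A] y(2) by (auto simp: dist_commute)
    have "?N B = A \<inter> (Y -` B \<inter> space M)" using sets.sets_into_space[OF A] by auto
    moreover have "Y -` B \<inter> space M \<in> sets M" using y(2) by (intro measurable_sets[OF Y]) auto
    ultimately have "?N B \<in> sets M" using A by auto
    then show ?thesis using e[OF y(1)] eq by (simp add: null_sets_def emeasure_eq_measure)
  qed
  have "(\<Union>B\<in>F'. ?N B) \<in> null_sets M" using F'(2) null by (rule null_sets_UN')
  moreover have "{\<omega> \<in> space M. \<not> (\<omega> \<in> A \<longrightarrow> Y \<omega> \<in> csupp M A Y)} \<subseteq> (\<Union>B\<in>F'. ?N B)"
  proof
    fix \<omega> assume w: "\<omega> \<in> {\<omega> \<in> space M. \<not> (\<omega> \<in> A \<longrightarrow> Y \<omega> \<in> csupp M A Y)}"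
    then have "Y \<omega> \<in> \<Union>?F" using e[of "Y \<omega>"] by force
    then obtain B where "B \<in> F'" "Y \<omega> \<in> B" using F'(3) by blast
    then show "\<omega> \<in> (\<Union>B\<in>F'. ?N B)" using w by blast
  qed
  ultimately show ?thesis by (rule AE_I')
qed

lemma pos_exists: assumes "E \<in> sets M" "0 < prob E" "AE \<omega> in M. P \<omega>" shows "\<exists>\<omega>\<in>E. P \<omega>"
proof (rule ccontr)
  assume "\<not> (\<exists>\<omega>\<in>E. P \<omega>)"
  obtain N where N0: "{\<omega> \<in> space M. \<not> P \<omega>} \<subseteq> N" "emeasure M N = 0" "N \<in> sets M" using assms(3) by (rule AE_E)
  then have N: "{\<omega> \<in> space M. \<not> P \<omega>} \<subseteq> N" "N \<in> null_sets M" by auto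
  have "E \<subseteq> N" using N(1) \<open>\<not> (\<exists>\<omega>\<in>E. P \<omega>)\<close> sets.sets_into_space[OF assms(1)] by blast
  then have "prob E \<le> prob N" using N(2) by (intro finite_measure_mono) auto
  then show False using N(2) assms(2) by (simp add: null_sets_def emeasure_eq_measure)
qed

lemma ccdf_mono: assumes "x \<le> x'" "{\<omega> \<in> A. Y \<omega> \<le> x'} \<in> sets M" shows "ccdf M A Y x \<le> ccdf M A Y x'"
proof -
  have "prob {\<omega> \<in> A. Y \<omega> \<le> x} \<le> prob {\<omega> \<in> A. Y \<omega> \<le> x'}"
    using assms by (intro finite_measure_mono) auto
  then show ?thesis unfolding ccdf_def by (simp add: divide_right_mono)
qed

lemma no_atom: assumes A: "A \<in> sets M" and Y: "Y \<in> borel_measurable M" and p: "0 < prob A"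
    and c: "continuous_on UNIV (ccdf M A Y)"
  shows "prob {\<omega> \<in> A. Y \<omega> = a} = 0"
proof -
  have meas: "{\<omega> \<in> A. Y \<omega> \<in> B} \<in> sets M" if "B \<in> sets borel" for B
  proof -
    have "{\<omega> \<in> A. Y \<omega> \<in> B} = A \<inter> (Y -` B \<inter> space M)" using sets.sets_into_space[OF A] by auto
    moreover have "Y -` B \<inter> space M \<in> sets M" using that by (intro measurable_sets[OF Y])
    ultimately show ?thesis using A by auto
  qed
  have ic: "isCont (ccdf M A Y) a" using c by (simp add: continuous_on_eq_continuous_at)
  have "prob {\<omega> \<in> A. Y \<omega> = a} \<le> 0 + \<epsilon>" if e: "0 < \<epsilon>" for \<epsilon>
  proof -
    obtain s where s: "0 < s" "\<And>x. x \<noteq> a \<and> norm (x - a) < s \<Longrightarrow> norm (ccdf M A Y x - ccdf M A Y a) < \<epsilon> / prob A"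
      using ic e p unfolding isCont_def LIM_eq by (metis divide_pos_pos)
    let ?x = "a - s / 2"
    have lt: "ccdf M A Y a - ccdf M A Y ?x < \<epsilon> / prob A" using s(2)[of ?x] s(1) by auto
    have sub: "{\<omega> \<in> A. Y \<omega> \<le> ?x} \<subseteq> {\<omega> \<in> A. Y \<omega> \<le> a}" using s(1) by auto
    have m1: "{\<omega> \<in> A. Y \<omega> \<le> a} \<in> sets M" "{\<omega> \<in> A. Y \<omega> \<le> ?x} \<in> sets M" "{\<omega> \<in> A. Y \<omega> = a} \<in> sets M"
      using meas[of "{..a}"] meas[of "{..?x}"] meas[of "{a}"] by auto
    have "{\<omega> \<in> A. Y \<omega> = a} \<subseteq> {\<omega> \<in> A. Y \<omega> \<le> a} - {\<omega> \<in> A. Y \<omega> \<le> ?x}" using s(1) by auto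
    then have "prob {\<omega> \<in> A. Y \<omega> = a} \<le> prob ({\<omega> \<in> A. Y \<omega> \<le> a} - {\<omega> \<in> A. Y \<omega> \<le> ?x})"
      using m1 by (intro finite_measure_mono) auto
    also have "\<dots> = prob {\<omega> \<in> A. Y \<omega> \<le> a} - prob {\<omega> \<in> A. Y \<omega> \<le> ?x}"
      using m1 sub by (intro finite_measure_Diff) auto
    also have "\<dots> = prob A * (ccdf M A Y a - ccdf M A Y ?x)"
      unfolding ccdf_def using p by (simp add: field_simps)
    also have "\<dots> \<le> prob A * (\<epsilon> / prob A)" using lt p by (intro mult_left_mono) auto
    also have "\<dots> = \<epsilon>" using p by simp
    finally show ?thesis by simp
  qed
  then have "prob {\<omega> \<in> A. Y \<omega> = a} \<le> 0" by (rule field_le_epsilon)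
  then show ?thesis using measure_nonneg[of M "{\<omega> \<in> A. Y \<omega> = a}"] by linarith
qed

lemma transfer:
  assumes A0: "A0 \<in> sets M" and A1: "A1 \<in> sets M" and X: "X \<in> borel_measurable M" and c: "0 \<le> c"
    and eqB: "\<And>B. B \<in> sets borel \<Longrightarrow> prob (A1 \<inter> (X -` B \<inter> space M)) = c * prob (A0 \<inter> (X -` B \<inter> space M))"
    and f: "f \<in> borel_measurable borel"
  shows "Ion M A1 (\<lambda>\<omega>. f (X \<omega>)) = c * Ion M A0 (\<lambda>\<omega>. f (X \<omega>))"
proof -
  let ?N = "\<lambda>A. distr (density M (\<lambda>\<omega>. ennreal (indicator A \<omega>))) borel X"
  have Xd: "X \<in> measurable (density M (\<lambda>\<omega>. ennreal (indicator A \<omega>))) borel" for A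
    using X by (simp add: measurable_density_eq1)
  have I: "Ion M A (\<lambda>\<omega>. f (X \<omega>)) = integral\<^sup>L (?N A) f" if A: "A \<in> sets M" for A
  proof -
    have "integral\<^sup>L (?N A) f = integral\<^sup>L (density M (\<lambda>\<omega>. ennreal (indicator A \<omega>))) (\<lambda>\<omega>. f (X \<omega>))"
      by (rule integral_distr[OF Xd f])
    also have "\<dots> = (\<integral>\<omega>. indicator A \<omega> *\<^sub>R f (X \<omega>) \<partial>M)"
      by (rule integral_density) (use X f A in auto)
    finally show ?thesis by (simp add: Ion_def)
  qed
  have E: "?N A1 = density (?N A0) (\<lambda>_. ennreal c)"
  proof (rule measure_eqI)
    show "sets (?N A1) = sets (density (?N A0) (\<lambda>_. ennreal c))" by simp
    fix B assume "B \<in> sets (?N A1)"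
    then have B: "B \<in> sets borel" by simp
    have XB: "X -` B \<inter> space M \<in> sets M" using X B by (rule measurable_sets)
    have em: "emeasure (?N A) B = emeasure M (A \<inter> (X -` B \<inter> space M))" if A: "A \<in> sets M" for A
    proof -
      have "emeasure (?N A) B = emeasure (density M (\<lambda>\<omega>. ennreal (indicator A \<omega>))) (X -` B \<inter> space M)"
        using emeasure_distr[OF Xd B] by simp
      also have "\<dots> = emeasure M (A \<inter> (X -` B \<inter> space M))"
        using emeasure_restricted[OF A XB] by (simp add: ennreal_indicator)
      finally show ?thesis .
    qed
    have "emeasure (?N A1) B = emeasure M (A1 \<inter> (X -` B \<inter> space M))" by (rule em[OF A1])
    also have "\<dots> = ennreal (c * prob (A0 \<inter> (X -` B \<inter> space M)))"
      using eqB[OF B] A1 XB by (simp add: emeasure_eq_measure)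
    also have "\<dots> = ennreal c * emeasure M (A0 \<inter> (X -` B \<inter> space M))"
      using c A0 XB by (simp add: emeasure_eq_measure ennreal_mult)
    also have "\<dots> = emeasure (density (?N A0) (\<lambda>_. ennreal c)) B"
      using B by (simp add: emeasure_density_const em[OF A0])
    finally show "emeasure (?N A1) B = emeasure (density (?N A0) (\<lambda>_. ennreal c)) B" .
  qed
  have "Ion M A1 (\<lambda>\<omega>. f (X \<omega>)) = integral\<^sup>L (density (?N A0) (\<lambda>_. ennreal c)) f" using I[OF A1] E by simp
  also have "\<dots> = (\<integral>x. c *\<^sub>R f x \<partial>(?N A0))" by (rule integral_density) (use f c in auto)
  also have "\<dots> = c * Ion M A0 (\<lambda>\<omega>. f (X \<omega>))" using I[OF A0] by simp
  finally show ?thesis .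
qed

lemma evt_XB: "X \<in> borel_measurable M \<Longrightarrow> B \<in> sets borel \<Longrightarrow> Measurable.pred M Q \<Longrightarrow> evt M (\<lambda>\<omega>. X \<omega> \<in> B \<and> Q \<omega>) \<in> sets M"
proof -
  assume X: "X \<in> borel_measurable M" and B: "B \<in> sets borel" and Q: "Measurable.pred M Q"
  have "evt M (\<lambda>\<omega>. X \<omega> \<in> B \<and> Q \<omega>) = (X -` B \<inter> space M) \<inter> evt M Q" by (auto simp: evt_def)
  moreover have "X -` B \<inter> space M \<in> sets M" using B by (rule measurable_sets[OF X])
  ultimately show ?thesis using Q by auto
qed


end

lemma final_alg:
  fixes a1 am b1 bm p P1 Pm :: real
  assumes "0 < b1" "0 < bm" "0 < p" "0 < P1" "0 < Pm"
  shows "((b1/p/P1 - 0) * P1 / ((b1/p/P1 - 0) * P1 + (0 - (-bm/p/Pm)) * Pm)) * ((a1/p/P1) / (b1/p/P1))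
     + (1 - (b1/p/P1 - 0) * P1 / ((b1/p/P1 - 0) * P1 + (0 - (-bm/p/Pm)) * Pm)) * ((-am/p/Pm) / (-bm/p/Pm))
     = (a1 + am) / (b1 + bm)"
proof -
  have w: "(b1/p/P1 - 0) * P1 / ((b1/p/P1 - 0) * P1 + (0 - (-bm/p/Pm)) * Pm) = b1/(b1+bm)"
    using assms by (simp add: field_simps)
  have x1: "(a1/p/P1) / (b1/p/P1) = a1/b1" using assms by (simp add: field_simps)
  have xm: "(-am/p/Pm) / (-bm/p/Pm) = am/bm" using assms by (simp add: field_simps)
  have s: "b1 + bm \<noteq> 0" using assms by simp
  have e1: "b1 / (b1 + bm) * (a1 / b1) = a1 / (b1 + bm)" using assms by simp
  have e2: "1 - b1 / (b1 + bm) = bm / (b1 + bm)" using s by (simp add: field_simps)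
  have e3: "bm / (b1 + bm) * (am / bm) = am / (b1 + bm)" using assms by simp
  have "b1 / (b1 + bm) * (a1 / b1) + (1 - b1 / (b1 + bm)) * (am / bm) = (a1 + am) / (b1 + bm)"
    unfolding e1 e2 e3 by (simp add: add_divide_distrib)
  then show ?thesis unfolding w x1 xm .
qed

lemma alg2: fixes a0 a1 q e r P0 P1 :: real
  assumes "0 < P0" "0 < P1"
  shows "(a0 * q * P0 + e * r * P0) / P0 = (a1 * q * P1 + e * r * P1) / P1 - (a1 - a0) * q"
proof -
  have "(a0 * q * P0 + e * r * P0) / P0 = a0 * q + e * r" using assms by (simp add: field_simps)
  moreover have "(a1 * q * P1 + e * r * P1) / P1 = a1 * q + e * r" using assms by (simp add: field_simps)
  ultimately show ?thesis by (simp add: algebra_simps)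
qed

locale T4 = prob_space M
  for M :: "'a measure" +
  fixes Y0 Y1 V :: "'a \<Rightarrow> real" and G T :: "'a \<Rightarrow> nat"
    and v :: "nat \<Rightarrow> nat \<Rightarrow> real" and gbar :: nat
  assumes meas_Y0[measurable]: "Y0 \<in> borel_measurable M" and meas_Y1[measurable]: "Y1 \<in> borel_measurable M"
    and meas_V[measurable]: "V \<in> borel_measurable M"
    and meas_G[measurable]: "G \<in> measurable M (count_space UNIV)"
    and meas_T[measurable]: "T \<in> measurable M (count_space UNIV)"
    and int_Y0: "integrable M Y0" and int_Y1: "integrable M Y1"
    and G_range: "\<forall>\<omega>\<in>space M. G \<omega> \<le> gbar"
    and T_range: "\<forall>\<omega>\<in>space M. T \<omega> \<le> 1"
    and cells_pos: "\<forall>g\<le>gbar. \<forall>t\<le>1. 0 < measure M (evt M (\<lambda>\<omega>. G \<omega> = g \<and> T \<omega> = t))"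
    and A1: "\<forall>B\<in>sets borel. \<forall>g t.
        measure M (evt M (\<lambda>\<omega>. V \<omega> \<in> B \<and> T \<omega> = t \<and> G \<omega> = g)) * measure M (evt M (\<lambda>\<omega>. G \<omega> = g))
      = measure M (evt M (\<lambda>\<omega>. V \<omega> \<in> B \<and> G \<omega> = g)) * measure M (evt M (\<lambda>\<omega>. T \<omega> = t \<and> G \<omega> = g))"
    and GT_indep: "indep_var (count_space UNIV) G (count_space UNIV) T"
    and Gs_ne: "\<exists>g\<le>gbar. EDgt M (dobs v V G T) G T g 1 = EDgt M (dobs v V G T) G T g 0"
    and pos1: "0 < measure M (evt M (\<lambda>\<omega>. gstar M (dobs v V G T) G T \<omega> = 1))"
    and posm1: "0 < measure M (evt M (\<lambda>\<omega>. gstar M (dobs v V G T) G T \<omega> = -1))"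
begin

abbreviation "Pt t \<equiv> prob (evt M (\<lambda>\<omega>. T \<omega> = t))"

lemma GT_prod: "prob (evt M (\<lambda>\<omega>. G \<omega> = g \<and> T \<omega> = t)) = prob (evt M (\<lambda>\<omega>. G \<omega> = g)) * Pt t"
proof -
  have "prob ((\<lambda>x. (G x, T x)) -` ({g} \<times> {t}) \<inter> space M) =
       prob (G -` {g} \<inter> space M) * prob (T -` {t} \<inter> space M)"
    by (rule indep_varD[OF GT_indep]) auto
  moreover have "(\<lambda>x. (G x, T x)) -` ({g} \<times> {t}) \<inter> space M = evt M (\<lambda>\<omega>. G \<omega> = g \<and> T \<omega> = t)"
    "G -` {g} \<inter> space M = evt M (\<lambda>\<omega>. G \<omega> = g)" "T -` {t} \<inter> space M = evt M (\<lambda>\<omega>. T \<omega> = t)"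
    by (auto simp: evt_def)
  ultimately show ?thesis by simp
qed

lemma G_pos: "g \<le> gbar \<Longrightarrow> 0 < prob (evt M (\<lambda>\<omega>. G \<omega> = g))"
  using cells_pos[rule_format, of g 0] GT_prod[of g 0] measure_nonneg[of M "evt M (\<lambda>\<omega>. T \<omega> = 0)"]
  by (auto simp: zero_less_mult_iff)

lemma Pt_pos: "t \<le> 1 \<Longrightarrow> 0 < Pt t"
  using cells_pos[rule_format, of 0 t] GT_prod[of 0 t] measure_nonneg[of M "evt M (\<lambda>\<omega>. G \<omega> = 0)"]
  by (auto simp: zero_less_mult_iff)

lemma P01: "Pt 0 + Pt 1 = 1"
proof -
  have "evt M (\<lambda>\<omega>. T \<omega> = 0) \<union> evt M (\<lambda>\<omega>. T \<omega> = 1) = space M"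
    using T_range by (auto simp: evt_def)
  moreover have "prob (evt M (\<lambda>\<omega>. T \<omega> = 0) \<union> evt M (\<lambda>\<omega>. T \<omega> = 1)) = Pt 0 + Pt 1"
    by (rule finite_measure_Union) (auto simp: evt_def)
  ultimately show ?thesis using prob_space by simp
qed

lemma G_empty: "g > gbar \<Longrightarrow> evt M (\<lambda>\<omega>. G \<omega> = g \<and> Q \<omega>) = {}"
  using G_range by (auto simp: evt_def)

lemma VGT: assumes B: "B \<in> sets borel"
  shows "prob (evt M (\<lambda>\<omega>. V \<omega> \<in> B \<and> G \<omega> = g \<and> T \<omega> = t)) = prob (evt M (\<lambda>\<omega>. V \<omega> \<in> B \<and> G \<omega> = g)) * Pt t"
proof (cases "g \<le> gbar")
  case True
  have e1: "evt M (\<lambda>\<omega>. V \<omega> \<in> B \<and> T \<omega> = t \<and> G \<omega> = g) = evt M (\<lambda>\<omega>. V \<omega> \<in> B \<and> G \<omega> = g \<and> T \<omega> = t)"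
    "evt M (\<lambda>\<omega>. T \<omega> = t \<and> G \<omega> = g) = evt M (\<lambda>\<omega>. G \<omega> = g \<and> T \<omega> = t)" by (auto simp: evt_def)
  have "prob (evt M (\<lambda>\<omega>. V \<omega> \<in> B \<and> T \<omega> = t \<and> G \<omega> = g)) * prob (evt M (\<lambda>\<omega>. G \<omega> = g))
      = prob (evt M (\<lambda>\<omega>. V \<omega> \<in> B \<and> G \<omega> = g)) * prob (evt M (\<lambda>\<omega>. T \<omega> = t \<and> G \<omega> = g))"
    using A1[rule_format, OF B, of t g] .
  then have "prob (evt M (\<lambda>\<omega>. V \<omega> \<in> B \<and> G \<omega> = g \<and> T \<omega> = t)) * prob (evt M (\<lambda>\<omega>. G \<omega> = g))
     = (prob (evt M (\<lambda>\<omega>. V \<omega> \<in> B \<and> G \<omega> = g)) * Pt t) * prob (evt M (\<lambda>\<omega>. G \<omega> = g))"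
    unfolding e1 GT_prod[of g t] by (simp only: mult_ac)
  then show ?thesis using G_pos[OF True] by (subst (asm) mult_cancel_right) simp
next
  case False
  then have "evt M (\<lambda>\<omega>. V \<omega> \<in> B \<and> G \<omega> = g \<and> T \<omega> = t) = {}" "evt M (\<lambda>\<omega>. V \<omega> \<in> B \<and> G \<omega> = g) = {}"
    using G_range by (auto simp: evt_def)
  then show ?thesis by simp
qed


abbreviation "D0 \<equiv> treat v V G 0"
abbreviation "D1 \<equiv> treat v V G 1"
abbreviation "Dob \<equiv> dobs v V G T"
abbreviation "Yob \<equiv> yobs (dobs v V G T) Y0 Y1"

lemma meas_treat[measurable]: "treat v V G t \<in> borel_measurable M"
  unfolding treat_def by measurable
lemma meas_dobs[measurable]: "dobs v V G T \<in> borel_measurable M"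
  unfolding dobs_def treat_def by measurable
lemma meas_yobs[measurable]: "yobs (dobs v V G T) Y0 Y1 \<in> borel_measurable M"
  unfolding yobs_def by measurable

lemma evt_VB: "B \<in> sets borel \<Longrightarrow> Measurable.pred M Q \<Longrightarrow> evt M (\<lambda>\<omega>. V \<omega> \<in> B \<and> Q \<omega>) \<in> sets M"
proof -
  assume B: "B \<in> sets borel" and Q: "Measurable.pred M Q"
  have "evt M (\<lambda>\<omega>. V \<omega> \<in> B \<and> Q \<omega>) = (V -` B \<inter> space M) \<inter> evt M Q" by (auto simp: evt_def)
  moreover have "V -` B \<inter> space M \<in> sets M" using B by (rule measurable_sets[OF meas_V])
  ultimately show ?thesis using Q by auto
qed

lemma evt_groups: "evt M (\<lambda>\<omega>. P (G \<omega>) \<omega>) = (\<Union>g\<in>{..gbar}. evt M (\<lambda>\<omega>. G \<omega> = g \<and> P g \<omega>))"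
  using G_range by (auto simp: evt_def)

lemma disj_groups: "disjoint_family_on (\<lambda>g. evt M (\<lambda>\<omega>. G \<omega> = g \<and> P g \<omega>)) I"
  by (auto simp: disjoint_family_on_def evt_def)

lemma prob_groups: assumes "\<And>g. g \<le> gbar \<Longrightarrow> evt M (\<lambda>\<omega>. G \<omega> = g \<and> P g \<omega>) \<in> sets M"
  shows "prob (evt M (\<lambda>\<omega>. P (G \<omega>) \<omega>)) = (\<Sum>g\<le>gbar. prob (evt M (\<lambda>\<omega>. G \<omega> = g \<and> P g \<omega>)))"
  unfolding evt_groups[of P] using assms disj_groups
  by (intro finite_measure_finite_Union) auto

lemma sets_groups: assumes "\<And>g. g \<le> gbar \<Longrightarrow> evt M (\<lambda>\<omega>. G \<omega> = g \<and> P g \<omega>) \<in> sets M"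
  shows "evt M (\<lambda>\<omega>. P (G \<omega>) \<omega>) \<in> sets M"
  unfolding evt_groups[of P] using assms by auto

lemma Ion_groups: assumes "\<And>g. g \<le> gbar \<Longrightarrow> integrable M (\<lambda>\<omega>. indicator (evt M (\<lambda>\<omega>. G \<omega> = g \<and> P g \<omega>)) \<omega> * X \<omega>)"
  shows "Ion M (evt M (\<lambda>\<omega>. P (G \<omega>) \<omega>)) X = (\<Sum>g\<le>gbar. Ion M (evt M (\<lambda>\<omega>. G \<omega> = g \<and> P g \<omega>)) X)"
  unfolding evt_groups[of P] using assms disj_groups
  by (intro Ion_sum) auto

lemma VGT_gen: assumes "\<And>g. {x. \<phi> g x} \<in> sets borel"
  shows "evt M (\<lambda>\<omega>. \<phi> (G \<omega>) (V \<omega>)) \<in> sets M"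
    and "prob (evt M (\<lambda>\<omega>. \<phi> (G \<omega>) (V \<omega>) \<and> T \<omega> = t)) = prob (evt M (\<lambda>\<omega>. \<phi> (G \<omega>) (V \<omega>))) * Pt t"
proof -
  have e1: "evt M (\<lambda>\<omega>. G \<omega> = g \<and> \<phi> g (V \<omega>)) = evt M (\<lambda>\<omega>. V \<omega> \<in> {x. \<phi> g x} \<and> G \<omega> = g)" for g
    by (auto simp: evt_def)
  have e2: "evt M (\<lambda>\<omega>. G \<omega> = g \<and> \<phi> g (V \<omega>) \<and> T \<omega> = t) = evt M (\<lambda>\<omega>. V \<omega> \<in> {x. \<phi> g x} \<and> G \<omega> = g \<and> T \<omega> = t)" for g
    by (auto simp: evt_def)
  have s1: "evt M (\<lambda>\<omega>. G \<omega> = g \<and> \<phi> g (V \<omega>)) \<in> sets M" for g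
    unfolding e1 using assms by (intro evt_VB) auto
  have s2: "evt M (\<lambda>\<omega>. G \<omega> = g \<and> \<phi> g (V \<omega>) \<and> T \<omega> = t) \<in> sets M" for g
    unfolding e2 using assms by (intro evt_VB) auto
  show "evt M (\<lambda>\<omega>. \<phi> (G \<omega>) (V \<omega>)) \<in> sets M"
    using sets_groups[where P="\<lambda>g \<omega>. \<phi> g (V \<omega>)"] s1 by blast
  have "prob (evt M (\<lambda>\<omega>. \<phi> (G \<omega>) (V \<omega>) \<and> T \<omega> = t)) = (\<Sum>g\<le>gbar. prob (evt M (\<lambda>\<omega>. G \<omega> = g \<and> \<phi> g (V \<omega>) \<and> T \<omega> = t)))"
    using prob_groups[where P="\<lambda>g \<omega>. \<phi> g (V \<omega>) \<and> T \<omega> = t"] s2 by blast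
  also have "\<dots> = (\<Sum>g\<le>gbar. prob (evt M (\<lambda>\<omega>. G \<omega> = g \<and> \<phi> g (V \<omega>))) * Pt t)"
    unfolding e1 e2 by (intro sum.cong refl VGT assms)
  also have "\<dots> = prob (evt M (\<lambda>\<omega>. \<phi> (G \<omega>) (V \<omega>))) * Pt t"
    using prob_groups[where P="\<lambda>g \<omega>. \<phi> g (V \<omega>)"] s1 by (simp add: sum_distrib_right)
  finally show "prob (evt M (\<lambda>\<omega>. \<phi> (G \<omega>) (V \<omega>) \<and> T \<omega> = t)) = prob (evt M (\<lambda>\<omega>. \<phi> (G \<omega>) (V \<omega>))) * Pt t" .
qed



abbreviation "Gs \<equiv> gstar M (dobs v V G T) G T"

definition gs :: "nat \<Rightarrow> int" where
  "gs g = (if EDgt M Dob G T g 1 > EDgt M Dob G T g 0 then 1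
      else if EDgt M Dob G T g 1 < EDgt M Dob G T g 0 then -1 else 0)"

lemma Gs_eq: "Gs \<omega> = gs (G \<omega>)"
  by (simp add: gstar_def gs_def)

definition pg :: "nat \<Rightarrow> nat \<Rightarrow> real" where
  "pg g t = prob (evt M (\<lambda>\<omega>. v g t \<le> V \<omega> \<and> G \<omega> = g))"

abbreviation "PG k \<equiv> prob (evt M (\<lambda>\<omega>. Gs \<omega> = k))"

lemma sets_GT[measurable]: "evt M (\<lambda>\<omega>. G \<omega> = g \<and> T \<omega> = t) \<in> sets M"
  by (intro evt_sets) measurable

lemma sets_G[measurable]: "evt M (\<lambda>\<omega>. G \<omega> = g) \<in> sets M"
  by (intro evt_sets) measurable

lemma sets_T[measurable]: "evt M (\<lambda>\<omega>. T \<omega> = t) \<in> sets M"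
  by (intro evt_sets) measurable

lemma EDgt_eq: assumes "g \<le> gbar" "t \<le> 1"
  shows "EDgt M Dob G T g t = pg g t / prob (evt M (\<lambda>\<omega>. G \<omega> = g))"
proof -
  have B: "{x. v g t \<le> x} \<in> sets borel" by measurable
  have "Ion M (evt M (\<lambda>\<omega>. G \<omega> = g \<and> T \<omega> = t)) Dob
      = Ion M (evt M (\<lambda>\<omega>. G \<omega> = g \<and> T \<omega> = t)) (indicator (evt M (\<lambda>\<omega>. V \<omega> \<in> {x. v g t \<le> x} \<and> True)))"
    by (rule Ion_cong) (auto simp: evt_def dobs_def treat_def indicator_def)
  also have "\<dots> = prob (evt M (\<lambda>\<omega>. G \<omega> = g \<and> T \<omega> = t) \<inter> evt M (\<lambda>\<omega>. V \<omega> \<in> {x. v g t \<le> x} \<and> True))"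
    using B by (intro Ion_ind sets_GT evt_VB) auto
  also have "evt M (\<lambda>\<omega>. G \<omega> = g \<and> T \<omega> = t) \<inter> evt M (\<lambda>\<omega>. V \<omega> \<in> {x. v g t \<le> x} \<and> True)
      = evt M (\<lambda>\<omega>. V \<omega> \<in> {x. v g t \<le> x} \<and> G \<omega> = g \<and> T \<omega> = t)" by (auto simp: evt_def)
  also have "prob \<dots> = prob (evt M (\<lambda>\<omega>. V \<omega> \<in> {x. v g t \<le> x} \<and> G \<omega> = g)) * Pt t"
    using B by (rule VGT)
  also have "evt M (\<lambda>\<omega>. V \<omega> \<in> {x. v g t \<le> x} \<and> G \<omega> = g) = evt M (\<lambda>\<omega>. v g t \<le> V \<omega> \<and> G \<omega> = g)"
    by (auto simp: evt_def)
  finally have I: "Ion M (evt M (\<lambda>\<omega>. G \<omega> = g \<and> T \<omega> = t)) Dob = pg g t * Pt t" unfolding pg_def .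
  have "EDgt M Dob G T g t = Ion M (evt M (\<lambda>\<omega>. G \<omega> = g \<and> T \<omega> = t)) Dob / (prob (evt M (\<lambda>\<omega>. G \<omega> = g)) * Pt t)"
    unfolding EDgt_def cexp_def Ion_def GT_prod ..
  also have "\<dots> = pg g t / prob (evt M (\<lambda>\<omega>. G \<omega> = g))"
    unfolding I using Pt_pos[OF assms(2)] by simp
  finally show ?thesis .
qed

lemma gs_cases: assumes "g \<le> gbar"
  shows "gs g = 1 \<longleftrightarrow> pg g 1 > pg g 0" "gs g = -1 \<longleftrightarrow> pg g 1 < pg g 0" "gs g = 0 \<longleftrightarrow> pg g 1 = pg g 0"
proof -
  have p: "0 < prob (evt M (\<lambda>\<omega>. G \<omega> = g))" using G_pos[OF assms] .
  have e1: "EDgt M Dob G T g 1 = pg g 1 / prob (evt M (\<lambda>\<omega>. G \<omega> = g))" using EDgt_eq[OF assms] by simp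
  have e0: "EDgt M Dob G T g 0 = pg g 0 / prob (evt M (\<lambda>\<omega>. G \<omega> = g))" using EDgt_eq[OF assms] by simp
  have c1: "(pg g 0 / prob (evt M (\<lambda>\<omega>. G \<omega> = g)) < pg g 1 / prob (evt M (\<lambda>\<omega>. G \<omega> = g))) = (pg g 0 < pg g 1)"
    "(pg g 1 / prob (evt M (\<lambda>\<omega>. G \<omega> = g)) < pg g 0 / prob (evt M (\<lambda>\<omega>. G \<omega> = g))) = (pg g 1 < pg g 0)"
    using p by (simp_all add: divide_less_cancel)
  show "gs g = 1 \<longleftrightarrow> pg g 1 > pg g 0" "gs g = -1 \<longleftrightarrow> pg g 1 < pg g 0" "gs g = 0 \<longleftrightarrow> pg g 1 = pg g 0"
    unfolding gs_def e1 e0 c1 by auto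
qed

lemma pg_sets: "evt M (\<lambda>\<omega>. v g t \<le> V \<omega> \<and> G \<omega> = g) \<in> sets M"
  by (intro evt_sets) measurable

lemma gs1_v: assumes "g \<le> gbar" "gs g = 1" shows "v g 1 < v g 0"
proof (rule ccontr)
  assume "\<not> v g 1 < v g 0"
  then have "evt M (\<lambda>\<omega>. v g 1 \<le> V \<omega> \<and> G \<omega> = g) \<subseteq> evt M (\<lambda>\<omega>. v g 0 \<le> V \<omega> \<and> G \<omega> = g)"
    by (auto simp: evt_def)
  then have "pg g 1 \<le> pg g 0" unfolding pg_def by (intro finite_measure_mono pg_sets)
  then show False using gs_cases(1)[OF assms(1)] assms(2) by simp
qed

lemma gsm1_v: assumes "g \<le> gbar" "gs g = -1" shows "v g 0 < v g 1"
proof (rule ccontr)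
  assume "\<not> v g 0 < v g 1"
  then have "evt M (\<lambda>\<omega>. v g 0 \<le> V \<omega> \<and> G \<omega> = g) \<subseteq> evt M (\<lambda>\<omega>. v g 1 \<le> V \<omega> \<and> G \<omega> = g)"
    by (auto simp: evt_def)
  then have "pg g 0 \<le> pg g 1" unfolding pg_def by (intro finite_measure_mono pg_sets)
  then show False using gs_cases(2)[OF assms(1)] assms(2) by simp
qed

lemma sets_sw[measurable]: "evt M (\<lambda>\<omega>. G \<omega> = g \<and> D0 \<omega> \<noteq> D1 \<omega>) \<in> sets M"
  by (intro evt_sets) measurable

lemma gs0_null: assumes "g \<le> gbar" "gs g = 0"
  shows "prob (evt M (\<lambda>\<omega>. G \<omega> = g \<and> D0 \<omega> \<noteq> D1 \<omega>)) = 0"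
proof -
  have eq: "pg g 1 = pg g 0" using gs_cases(3)[OF assms(1)] assms(2) by simp
  show ?thesis
  proof (cases "v g 1 \<le> v g 0")
    case True
    then have "evt M (\<lambda>\<omega>. G \<omega> = g \<and> D0 \<omega> \<noteq> D1 \<omega>) = evt M (\<lambda>\<omega>. v g 1 \<le> V \<omega> \<and> G \<omega> = g) - evt M (\<lambda>\<omega>. v g 0 \<le> V \<omega> \<and> G \<omega> = g)"
      "evt M (\<lambda>\<omega>. v g 0 \<le> V \<omega> \<and> G \<omega> = g) \<subseteq> evt M (\<lambda>\<omega>. v g 1 \<le> V \<omega> \<and> G \<omega> = g)"
      by (auto simp: evt_def treat_def)
    then show ?thesis using eq unfolding pg_def by (simp add: finite_measure_Diff pg_sets)
  next
    case False
    then have "evt M (\<lambda>\<omega>. G \<omega> = g \<and> D0 \<omega> \<noteq> D1 \<omega>) = evt M (\<lambda>\<omega>. v g 0 \<le> V \<omega> \<and> G \<omega> = g) - evt M (\<lambda>\<omega>. v g 1 \<le> V \<omega> \<and> G \<omega> = g)"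
      "evt M (\<lambda>\<omega>. v g 1 \<le> V \<omega> \<and> G \<omega> = g) \<subseteq> evt M (\<lambda>\<omega>. v g 0 \<le> V \<omega> \<and> G \<omega> = g)"
      by (auto simp: evt_def treat_def)
    then show ?thesis using eq unfolding pg_def by (simp add: finite_measure_Diff pg_sets)
  qed
qed



lemma integrable_restrict: assumes "integrable M (\<lambda>\<omega>. indicator A \<omega> * (R \<omega>::real))" "B \<in> sets M"
  shows "integrable M (\<lambda>\<omega>. indicator (A \<inter> B) \<omega> * R \<omega>)"
proof -
  have "integrable M (\<lambda>\<omega>. indicator B \<omega> * (indicator A \<omega> * R \<omega>))"
    using Ion_integrable[OF assms(2) assms(1)] .
  then show ?thesis by (simp add: indicator_inter_arith mult_ac)
qed

lemma integrable_restrict_evt: assumes "integrable M (\<lambda>\<omega>. indicator (evt M P) \<omega> * (R \<omega>::real))" "evt M Q \<in> sets M"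
  shows "integrable M (\<lambda>\<omega>. indicator (evt M (\<lambda>\<omega>. Q \<omega> \<and> P \<omega>)) \<omega> * R \<omega>)"
proof -
  have "evt M (\<lambda>\<omega>. Q \<omega> \<and> P \<omega>) = evt M P \<inter> evt M Q" by (auto simp: evt_def)
  then show ?thesis using integrable_restrict[OF assms] by simp
qed

lemma meas_Gs[measurable]: "Gs \<in> measurable M (count_space UNIV)"
  unfolding Gs_eq[abs_def] by measurable

lemma sets_GsT[measurable]: "evt M (\<lambda>\<omega>. Gs \<omega> = k \<and> T \<omega> = t) \<in> sets M"
  by (intro evt_sets) measurable

lemma sets_Gs[measurable]: "evt M (\<lambda>\<omega>. Gs \<omega> = k) \<in> sets M"
  by (intro evt_sets) measurable

lemma PGT: "prob (evt M (\<lambda>\<omega>. Gs \<omega> = k \<and> T \<omega> = t)) = PG k * Pt t"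
proof -
  have "prob (evt M (\<lambda>\<omega>. (\<lambda>g x. gs g = k) (G \<omega>) (V \<omega>) \<and> T \<omega> = t)) = prob (evt M (\<lambda>\<omega>. (\<lambda>g x. gs g = k) (G \<omega>) (V \<omega>))) * Pt t"
    by (rule VGT_gen(2)) (case_tac "gs g = k", auto)
  then show ?thesis by (simp add: Gs_eq)
qed

lemma PG_sum: "PG k = (\<Sum>g\<in>{g\<in>{..gbar}. gs g = k}. prob (evt M (\<lambda>\<omega>. G \<omega> = g)))"
proof -
  have "PG k = prob (evt M (\<lambda>\<omega>. (\<lambda>g \<omega>. gs g = k) (G \<omega>) \<omega>))" by (simp add: Gs_eq)
  also have "\<dots> = (\<Sum>g\<le>gbar. prob (evt M (\<lambda>\<omega>. G \<omega> = g \<and> gs g = k)))"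
    by (rule prob_groups) (intro evt_sets, measurable)
  also have "\<dots> = (\<Sum>g\<le>gbar. if gs g = k then prob (evt M (\<lambda>\<omega>. G \<omega> = g)) else 0)"
    by (intro sum.cong refl) (auto simp: evt_def)
  also have "\<dots> = (\<Sum>g\<in>{g\<in>{..gbar}. gs g = k}. prob (evt M (\<lambda>\<omega>. G \<omega> = g)))"
    by (rule sum.inter_filter[symmetric]) simp
  finally show ?thesis .
qed

lemma Ion_Gs_sum: assumes "integrable M (\<lambda>\<omega>. indicator (evt M (\<lambda>\<omega>. T \<omega> = t)) \<omega> * R \<omega>)"
  shows "Ion M (evt M (\<lambda>\<omega>. Gs \<omega> = k \<and> T \<omega> = t)) R = (\<Sum>g\<in>{g\<in>{..gbar}. gs g = k}. Ion M (evt M (\<lambda>\<omega>. G \<omega> = g \<and> T \<omega> = t)) R)"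
proof -
  have "Ion M (evt M (\<lambda>\<omega>. Gs \<omega> = k \<and> T \<omega> = t)) R = Ion M (evt M (\<lambda>\<omega>. (\<lambda>g \<omega>. gs g = k \<and> T \<omega> = t) (G \<omega>) \<omega>)) R"
    by (simp add: Gs_eq)
  also have "\<dots> = (\<Sum>g\<le>gbar. Ion M (evt M (\<lambda>\<omega>. G \<omega> = g \<and> gs g = k \<and> T \<omega> = t)) R)"
  proof (rule Ion_groups)
    fix g
    have "integrable M (\<lambda>\<omega>. indicator (evt M (\<lambda>\<omega>. (G \<omega> = g \<and> gs g = k) \<and> T \<omega> = t)) \<omega> * R \<omega>)"
      by (rule integrable_restrict_evt[OF assms]) (intro evt_sets, measurable)
    then show "integrable M (\<lambda>\<omega>. indicator (evt M (\<lambda>\<omega>. G \<omega> = g \<and> gs g = k \<and> T \<omega> = t)) \<omega> * R \<omega>)"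
      by (simp add: conj_assoc)
  qed
  also have "\<dots> = (\<Sum>g\<le>gbar. if gs g = k then Ion M (evt M (\<lambda>\<omega>. G \<omega> = g \<and> T \<omega> = t)) R else 0)"
    by (intro sum.cong refl) (auto simp: evt_def Ion_def)
  also have "\<dots> = (\<Sum>g\<in>{g\<in>{..gbar}. gs g = k}. Ion M (evt M (\<lambda>\<omega>. G \<omega> = g \<and> T \<omega> = t)) R)"
    by (rule sum.inter_filter[symmetric]) simp
  finally show ?thesis .
qed

lemma cexpGs_sum: assumes "integrable M (\<lambda>\<omega>. indicator (evt M (\<lambda>\<omega>. T \<omega> = t)) \<omega> * R \<omega>)"
  shows "cexpGs M Gs T R k t = (\<Sum>g\<in>{g\<in>{..gbar}. gs g = k}. Ion M (evt M (\<lambda>\<omega>. G \<omega> = g \<and> T \<omega> = t)) R) / (PG k * Pt t)"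
proof -
  have "cexpGs M Gs T R k t = Ion M (evt M (\<lambda>\<omega>. Gs \<omega> = k \<and> T \<omega> = t)) R / prob (evt M (\<lambda>\<omega>. Gs \<omega> = k \<and> T \<omega> = t))"
    by (simp add: cexpGs_def cexp_def Ion_def)
  then show ?thesis unfolding Ion_Gs_sum[OF assms] PGT .
qed

lemma alg1: "(a::real)/(p*q) - b/(p*r) = (a/q - b/r)/p"
  by (simp add: diff_divide_distrib divide_divide_eq_left mult.commute)

lemma combine:
  assumes k: "0 < PG k"
    and iR: "integrable M (\<lambda>\<omega>. indicator (evt M (\<lambda>\<omega>. T \<omega> = 1)) \<omega> * R \<omega>)"
    and iZ: "integrable M (\<lambda>\<omega>. indicator (evt M (\<lambda>\<omega>. T \<omega> = 0)) \<omega> * Z \<omega>)"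
    and per: "\<And>g. g \<le> gbar \<Longrightarrow> gs g = k \<Longrightarrow>
      Ion M (evt M (\<lambda>\<omega>. G \<omega> = g \<and> T \<omega> = 1)) R / Pt 1 - Ion M (evt M (\<lambda>\<omega>. G \<omega> = g \<and> T \<omega> = 0)) Z / Pt 0
        = \<kappa> * prob (evt M (\<lambda>\<omega>. G \<omega> = g)) + J g"
  shows "cexpGs M Gs T R k 1 - cexpGs M Gs T Z k 0 = \<kappa> + (\<Sum>g\<in>{g\<in>{..gbar}. gs g = k}. J g) / PG k"
proof -
  let ?K = "{g\<in>{..gbar}. gs g = k}"
  have p1: "0 < Pt 1" and p0: "0 < Pt 0" using Pt_pos by auto
  have "cexpGs M Gs T R k 1 - cexpGs M Gs T Z k 0
     = ((\<Sum>g\<in>?K. Ion M (evt M (\<lambda>\<omega>. G \<omega> = g \<and> T \<omega> = 1)) R) / Pt 1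
       - (\<Sum>g\<in>?K. Ion M (evt M (\<lambda>\<omega>. G \<omega> = g \<and> T \<omega> = 0)) Z) / Pt 0) / PG k"
    unfolding cexpGs_sum[OF iR] cexpGs_sum[OF iZ] by (rule alg1)
  also have "(\<Sum>g\<in>?K. Ion M (evt M (\<lambda>\<omega>. G \<omega> = g \<and> T \<omega> = 1)) R) / Pt 1
       - (\<Sum>g\<in>?K. Ion M (evt M (\<lambda>\<omega>. G \<omega> = g \<and> T \<omega> = 0)) Z) / Pt 0
     = (\<Sum>g\<in>?K. Ion M (evt M (\<lambda>\<omega>. G \<omega> = g \<and> T \<omega> = 1)) R / Pt 1 - Ion M (evt M (\<lambda>\<omega>. G \<omega> = g \<and> T \<omega> = 0)) Z / Pt 0)"
    by (simp add: sum_divide_distrib sum_subtractf)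
  also have "\<dots> = (\<Sum>g\<in>?K. \<kappa> * prob (evt M (\<lambda>\<omega>. G \<omega> = g)) + J g)"
    by (intro sum.cong refl per) auto
  also have "\<dots> = \<kappa> * PG k + (\<Sum>g\<in>?K. J g)"
    unfolding PG_sum[of k] by (simp add: sum.distrib sum_distrib_left)
  finally show ?thesis using k by (simp add: add_divide_distrib)
qed



lemma int_treat: assumes "integrable M (X::'a\<Rightarrow>real)" shows "integrable M (\<lambda>\<omega>. treat v V G s \<omega> * X \<omega>)"
proof -
  have "integrable M (\<lambda>\<omega>. indicator (evt M (\<lambda>\<omega>. v (G \<omega>) s \<le> V \<omega>)) \<omega> * X \<omega>)"
    by (rule Ion_integrable[OF _ assms]) (intro evt_sets, measurable)
  moreover have "integrable M (\<lambda>\<omega>. indicator (evt M (\<lambda>\<omega>. v (G \<omega>) s \<le> V \<omega>)) \<omega> * X \<omega>) = integrable M (\<lambda>\<omega>. treat v V G s \<omega> * X \<omega>)"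
    by (rule Bochner_Integration.integrable_cong) (auto simp: treat_def evt_def)
  ultimately show ?thesis by simp
qed

lemma int_ind: "integrable M (X::'a\<Rightarrow>real) \<Longrightarrow> A \<in> sets M \<Longrightarrow> integrable M (\<lambda>\<omega>. indicator A \<omega> * X \<omega>)"
  by (rule Ion_integrable)

lemma Ion_treat: "Ion M (evt M (\<lambda>\<omega>. G \<omega> = g \<and> T \<omega> = t)) (treat v V G s) = pg g s * Pt t"
proof -
  have B: "{x. v g s \<le> x} \<in> sets borel" by measurable
  have "Ion M (evt M (\<lambda>\<omega>. G \<omega> = g \<and> T \<omega> = t)) (treat v V G s)
      = Ion M (evt M (\<lambda>\<omega>. G \<omega> = g \<and> T \<omega> = t)) (indicator (evt M (\<lambda>\<omega>. V \<omega> \<in> {x. v g s \<le> x} \<and> True)))"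
    by (rule Ion_cong) (auto simp: evt_def treat_def indicator_def)
  also have "\<dots> = prob (evt M (\<lambda>\<omega>. G \<omega> = g \<and> T \<omega> = t) \<inter> evt M (\<lambda>\<omega>. V \<omega> \<in> {x. v g s \<le> x} \<and> True))"
    using B by (intro Ion_ind sets_GT evt_VB) auto
  also have "evt M (\<lambda>\<omega>. G \<omega> = g \<and> T \<omega> = t) \<inter> evt M (\<lambda>\<omega>. V \<omega> \<in> {x. v g s \<le> x} \<and> True)
      = evt M (\<lambda>\<omega>. V \<omega> \<in> {x. v g s \<le> x} \<and> G \<omega> = g \<and> T \<omega> = t)" by (auto simp: evt_def)
  also have "prob \<dots> = prob (evt M (\<lambda>\<omega>. V \<omega> \<in> {x. v g s \<le> x} \<and> G \<omega> = g)) * Pt t"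
    using B by (rule VGT)
  also have "evt M (\<lambda>\<omega>. V \<omega> \<in> {x. v g s \<le> x} \<and> G \<omega> = g) = evt M (\<lambda>\<omega>. v g s \<le> V \<omega> \<and> G \<omega> = g)"
    by (auto simp: evt_def)
  finally show ?thesis unfolding pg_def .
qed

lemma Ion_Dob: "t \<le> 1 \<Longrightarrow> Ion M (evt M (\<lambda>\<omega>. G \<omega> = g \<and> T \<omega> = t)) Dob = pg g t * Pt t"
  unfolding Ion_treat[symmetric] by (rule Ion_cong) (auto simp: evt_def dobs_def)

lemma sum_to_Gs: assumes "integrable M X"
  shows "(\<Sum>g\<in>{g\<in>{..gbar}. gs g = k}. Ion M (evt M (\<lambda>\<omega>. G \<omega> = g \<and> T \<omega> = t)) X / Pt t)
    = Ion M (evt M (\<lambda>\<omega>. Gs \<omega> = k \<and> T \<omega> = t)) X / Pt t"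
  unfolding Ion_Gs_sum[OF int_ind[OF assms sets_T]] by (simp add: sum_divide_distrib)

lemma sets_sw2[measurable]: "evt M (\<lambda>\<omega>. Gs \<omega> = k \<and> T \<omega> = t \<and> D0 \<omega> \<noteq> D1 \<omega>) \<in> sets M"
  by (intro evt_sets) measurable

lemma sw_pos: "Ion M (evt M (\<lambda>\<omega>. Gs \<omega> = 1 \<and> T \<omega> = 1)) (\<lambda>\<omega>. (D1 \<omega> - D0 \<omega>) * W \<omega>)
   = Ion M (evt M (\<lambda>\<omega>. Gs \<omega> = 1 \<and> T \<omega> = 1 \<and> D0 \<omega> \<noteq> D1 \<omega>)) W"
proof (rule Ion_cong2)
  fix \<omega> assume w: "\<omega> \<in> space M"
  show "indicator (evt M (\<lambda>\<omega>. Gs \<omega> = 1 \<and> T \<omega> = 1)) \<omega> * ((D1 \<omega> - D0 \<omega>) * W \<omega>) =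
         indicator (evt M (\<lambda>\<omega>. Gs \<omega> = 1 \<and> T \<omega> = 1 \<and> D0 \<omega> \<noteq> D1 \<omega>)) \<omega> * W \<omega>"
  proof (cases "Gs \<omega> = 1")
    case True
    then have "v (G \<omega>) 1 < v (G \<omega>) 0" using gs1_v G_range w by (simp add: Gs_eq)
    then show ?thesis using w by (auto simp: evt_def treat_def indicator_def)
  next
    case False then show ?thesis by (auto simp: evt_def indicator_def)
  qed
qed

lemma sw_neg: "Ion M (evt M (\<lambda>\<omega>. Gs \<omega> = -1 \<and> T \<omega> = 1)) (\<lambda>\<omega>. (D1 \<omega> - D0 \<omega>) * W \<omega>)
   = - Ion M (evt M (\<lambda>\<omega>. Gs \<omega> = -1 \<and> T \<omega> = 1 \<and> D0 \<omega> \<noteq> D1 \<omega>)) W"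
proof -
  have "Ion M (evt M (\<lambda>\<omega>. Gs \<omega> = -1 \<and> T \<omega> = 1)) (\<lambda>\<omega>. (D1 \<omega> - D0 \<omega>) * W \<omega>)
   = Ion M (evt M (\<lambda>\<omega>. Gs \<omega> = -1 \<and> T \<omega> = 1 \<and> D0 \<omega> \<noteq> D1 \<omega>)) (\<lambda>\<omega>. -1 * W \<omega>)"
  proof (rule Ion_cong2)
    fix \<omega> assume w: "\<omega> \<in> space M"
    show "indicator (evt M (\<lambda>\<omega>. Gs \<omega> = -1 \<and> T \<omega> = 1)) \<omega> * ((D1 \<omega> - D0 \<omega>) * W \<omega>) =
         indicator (evt M (\<lambda>\<omega>. Gs \<omega> = -1 \<and> T \<omega> = 1 \<and> D0 \<omega> \<noteq> D1 \<omega>)) \<omega> * (-1 * W \<omega>)"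
    proof (cases "Gs \<omega> = -1")
      case True
      then have "v (G \<omega>) 0 < v (G \<omega>) 1" using gsm1_v G_range w by (simp add: Gs_eq)
      then show ?thesis using w by (auto simp: evt_def treat_def indicator_def)
    next
      case False then show ?thesis by (auto simp: evt_def indicator_def)
    qed
  qed
  then show ?thesis by (simp add: Ion_cmult[where c="-1", simplified])
qed

lemma sw0_null: "evt M (\<lambda>\<omega>. Gs \<omega> = 0 \<and> D0 \<omega> \<noteq> D1 \<omega>) \<in> null_sets M"
proof -
  have "prob (evt M (\<lambda>\<omega>. (\<lambda>g \<omega>. gs g = 0 \<and> D0 \<omega> \<noteq> D1 \<omega>) (G \<omega>) \<omega>))
     = (\<Sum>g\<le>gbar. prob (evt M (\<lambda>\<omega>. G \<omega> = g \<and> gs g = 0 \<and> D0 \<omega> \<noteq> D1 \<omega>)))"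
    by (rule prob_groups) (intro evt_sets, measurable)
  also have "\<dots> = 0"
  proof (intro sum.neutral ballI)
    fix g assume g: "g \<in> {..gbar}"
    show "prob (evt M (\<lambda>\<omega>. G \<omega> = g \<and> gs g = 0 \<and> D0 \<omega> \<noteq> D1 \<omega>)) = 0"
    proof (cases "gs g = 0")
      case True then show ?thesis using gs0_null[of g] g by simp
    next
      case False then show ?thesis by (simp add: evt_def)
    qed
  qed
  finally have "prob (evt M (\<lambda>\<omega>. Gs \<omega> = 0 \<and> D0 \<omega> \<noteq> D1 \<omega>)) = 0" by (simp add: Gs_eq)
  moreover have "evt M (\<lambda>\<omega>. Gs \<omega> = 0 \<and> D0 \<omega> \<noteq> D1 \<omega>) \<in> sets M" by (intro evt_sets) measurable
  ultimately show ?thesis by (simp add: null_sets_def emeasure_eq_measure)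
qed

lemma sw_zero: "Ion M (evt M (\<lambda>\<omega>. Gs \<omega> = 0 \<and> T \<omega> = 1)) (\<lambda>\<omega>. (D1 \<omega> - D0 \<omega>) * W \<omega>) = 0"
proof -
  have "AE \<omega> in M. \<omega> \<notin> evt M (\<lambda>\<omega>. Gs \<omega> = 0 \<and> D0 \<omega> \<noteq> D1 \<omega>)" using sw0_null by (rule AE_not_in)
  then have "AE \<omega> in M. indicator (evt M (\<lambda>\<omega>. Gs \<omega> = 0 \<and> T \<omega> = 1)) \<omega> * ((D1 \<omega> - D0 \<omega>) * W \<omega>) = 0"
    using AE_space by eventually_elim (auto simp: evt_def indicator_def)
  then show ?thesis unfolding Ion_def by (rule integral_eq_zero_AE)
qed



abbreviation "Dl \<equiv> (\<lambda>\<omega>. Y1 \<omega> - Y0 \<omega>)"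
abbreviation "aa k \<equiv> Ion M (evt M (\<lambda>\<omega>. Gs \<omega> = k \<and> T \<omega> = 1 \<and> D0 \<omega> \<noteq> D1 \<omega>)) Dl"
abbreviation "bb k \<equiv> prob (evt M (\<lambda>\<omega>. Gs \<omega> = k \<and> T \<omega> = 1 \<and> D0 \<omega> \<noteq> D1 \<omega>))"

lemma int_Dl: "integrable M Dl" using int_Y0 int_Y1 by simp

lemma int_D10: "integrable M (\<lambda>\<omega>. (D1 \<omega> - D0 \<omega>) * W \<omega>)" if "integrable M W" for W :: "'a \<Rightarrow> real"
  using int_treat[OF that, of 1] int_treat[OF that, of 0] by (simp add: left_diff_distrib)

lemma Ion_D10: "Ion M (evt M (\<lambda>\<omega>. G \<omega> = g \<and> T \<omega> = 1)) (\<lambda>\<omega>. (D1 \<omega> - D0 \<omega>) * 1) = (pg g 1 - pg g 0) * Pt 1"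
proof -
  have "Ion M (evt M (\<lambda>\<omega>. G \<omega> = g \<and> T \<omega> = 1)) (\<lambda>\<omega>. (D1 \<omega> - D0 \<omega>) * 1)
      = Ion M (evt M (\<lambda>\<omega>. G \<omega> = g \<and> T \<omega> = 1)) (\<lambda>\<omega>. D1 \<omega> - D0 \<omega>)" by simp
  also have "\<dots> = Ion M (evt M (\<lambda>\<omega>. G \<omega> = g \<and> T \<omega> = 1)) D1 - Ion M (evt M (\<lambda>\<omega>. G \<omega> = g \<and> T \<omega> = 1)) D0"
    using int_treat[of "\<lambda>_. 1"] by (intro Ion_diff int_ind) auto
  finally show ?thesis unfolding Ion_treat by (simp add: left_diff_distrib)
qed

lemma Dd: assumes "0 < PG k"
  shows "cexpGs M Gs T Dob k 1 - cexpGs M Gs T Dob k 0 = (Ion M (evt M (\<lambda>\<omega>. Gs \<omega> = k \<and> T \<omega> = 1)) (\<lambda>\<omega>. (D1 \<omega> - D0 \<omega>) * 1) / Pt 1) / PG k"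
proof -
  have iD: "integrable M Dob"
    by (rule integrable_const_bound[where B=1]) (auto simp: dobs_def treat_def)
  have "cexpGs M Gs T Dob k 1 - cexpGs M Gs T Dob k 0 = 0 + (\<Sum>g\<in>{g\<in>{..gbar}. gs g = k}. Ion M (evt M (\<lambda>\<omega>. G \<omega> = g \<and> T \<omega> = 1)) (\<lambda>\<omega>. (D1 \<omega> - D0 \<omega>) * 1) / Pt 1) / PG k"
  proof (rule combine[OF assms int_ind[OF iD sets_T] int_ind[OF iD sets_T]])
    fix g
    show "Ion M (evt M (\<lambda>\<omega>. G \<omega> = g \<and> T \<omega> = 1)) Dob / Pt 1 - Ion M (evt M (\<lambda>\<omega>. G \<omega> = g \<and> T \<omega> = 0)) Dob / Pt 0
      = 0 * prob (evt M (\<lambda>\<omega>. G \<omega> = g)) + Ion M (evt M (\<lambda>\<omega>. G \<omega> = g \<and> T \<omega> = 1)) (\<lambda>\<omega>. (D1 \<omega> - D0 \<omega>) * 1) / Pt 1"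
      unfolding Ion_D10 using Ion_Dob[of 1 g] Ion_Dob[of 0 g] Pt_pos[of 0] Pt_pos[of 1] by simp
  qed
  then show ?thesis unfolding sum_to_Gs[OF int_D10[of "\<lambda>_. 1"], OF integrable_const] by simp
qed



lemma Dd0: "cexpGs M Gs T Dob 0 1 - cexpGs M Gs T Dob 0 0 = 0"
proof (cases "PG 0 = 0")
  case True
  then show ?thesis by (simp add: cexpGs_def cexp_def PGT)
next
  case False
  then have "0 < PG 0" using measure_nonneg[of M "evt M (\<lambda>\<omega>. Gs \<omega> = 0)"] by linarith
  then show ?thesis unfolding Dd[OF \<open>0 < PG 0\<close>] using sw_zero[of "\<lambda>_. 1"] by simp
qed

lemma bb_Ion1: "Ion M (evt M (\<lambda>\<omega>. Gs \<omega> = 1 \<and> T \<omega> = 1)) (\<lambda>\<omega>. (D1 \<omega> - D0 \<omega>) * 1) = bb 1"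
  unfolding sw_pos by (rule Ion_one) (rule sets_sw2)

lemma bb_Ionm1: "Ion M (evt M (\<lambda>\<omega>. Gs \<omega> = -1 \<and> T \<omega> = 1)) (\<lambda>\<omega>. (D1 \<omega> - D0 \<omega>) * 1) = - bb (-1)"
  unfolding sw_neg by (subst Ion_one) (rule sets_sw2, simp)

lemma K_ne: assumes "0 < PG k" shows "{g\<in>{..gbar}. gs g = k} \<noteq> {}"
proof
  assume "{g\<in>{..gbar}. gs g = k} = {}"
  then have "PG k = 0" unfolding PG_sum[of k] by (simp only: sum.empty)
  with assms show False by simp
qed

lemma bb_sum: "(\<Sum>g\<in>{g\<in>{..gbar}. gs g = k}. pg g 1 - pg g 0) = Ion M (evt M (\<lambda>\<omega>. Gs \<omega> = k \<and> T \<omega> = 1)) (\<lambda>\<omega>. (D1 \<omega> - D0 \<omega>) * 1) / Pt 1"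
proof -
  have "(\<Sum>g\<in>{g\<in>{..gbar}. gs g = k}. pg g 1 - pg g 0) = (\<Sum>g\<in>{g\<in>{..gbar}. gs g = k}. Ion M (evt M (\<lambda>\<omega>. G \<omega> = g \<and> T \<omega> = 1)) (\<lambda>\<omega>. (D1 \<omega> - D0 \<omega>) * 1) / Pt 1)"
    unfolding Ion_D10 using Pt_pos[of 1] by simp
  also have "\<dots> = Ion M (evt M (\<lambda>\<omega>. Gs \<omega> = k \<and> T \<omega> = 1)) (\<lambda>\<omega>. (D1 \<omega> - D0 \<omega>) * 1) / Pt 1"
    by (rule sum_to_Gs) (rule int_D10, simp)
  finally show ?thesis .
qed

lemma bb1_pos: "0 < bb 1"
proof -
  have "0 < (\<Sum>g\<in>{g\<in>{..gbar}. gs g = 1}. pg g 1 - pg g 0)"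
    using K_ne[OF pos1[folded Gs_eq[abs_def]]] gs_cases(1) by (intro sum_pos) auto
  then show ?thesis unfolding bb_sum bb_Ion1 using Pt_pos[of 1] by (simp add: zero_less_divide_iff)
qed

lemma bbm1_pos: "0 < bb (-1)"
proof -
  have "0 > (\<Sum>g\<in>{g\<in>{..gbar}. gs g = -1}. pg g 1 - pg g 0)"
  proof -
    have "0 < (\<Sum>g\<in>{g\<in>{..gbar}. gs g = -1}. pg g 0 - pg g 1)"
      using K_ne[OF posm1] gs_cases(2) by (intro sum_pos) auto
    then show ?thesis by (simp add: sum_subtractf)
  qed
  then show ?thesis unfolding bb_sum bb_Ionm1 using Pt_pos[of 1] by (simp add: divide_less_0_iff zero_less_divide_iff)
qed

lemma Gs_range: "Gs \<omega> \<in> {-1, 0, 1}"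
  by (simp add: Gs_eq gs_def)

lemma delta_star: "cexp M (evt M (\<lambda>\<omega>. D0 \<omega> \<noteq> D1 \<omega> \<and> T \<omega> = 1)) Dl = (aa 1 + aa (-1)) / (bb 1 + bb (-1))"
proof -
  let ?A = "\<lambda>k. evt M (\<lambda>\<omega>. Gs \<omega> = k \<and> T \<omega> = 1 \<and> D0 \<omega> \<noteq> D1 \<omega>)"
  have U: "evt M (\<lambda>\<omega>. D0 \<omega> \<noteq> D1 \<omega> \<and> T \<omega> = 1) = (\<Union>k\<in>{-1,0,1}. ?A k)"
    using Gs_range by (auto simp: evt_def)
  have dj: "disjoint_family_on ?A {-1,0,1}" by (auto simp: disjoint_family_on_def evt_def)
  have n0: "bb 0 = 0"
  proof -
    have "?A 0 \<subseteq> evt M (\<lambda>\<omega>. Gs \<omega> = 0 \<and> D0 \<omega> \<noteq> D1 \<omega>)" by (auto simp: evt_def)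
    then have "?A 0 \<in> null_sets M" by (rule null_sets_subset[OF sw0_null sets_sw2])
    then show ?thesis by (simp add: null_sets_def emeasure_eq_measure)
  qed
  have a0: "aa 0 = 0" using Ion_null[OF sets_sw2 n0] .
  have "Ion M (evt M (\<lambda>\<omega>. D0 \<omega> \<noteq> D1 \<omega> \<and> T \<omega> = 1)) Dl = (\<Sum>k\<in>{-1,0,1}. aa k)"
    unfolding U using dj by (intro Ion_sum int_ind int_Dl) auto
  moreover have "prob (evt M (\<lambda>\<omega>. D0 \<omega> \<noteq> D1 \<omega> \<and> T \<omega> = 1)) = (\<Sum>k\<in>{-1,0,1}. bb k)"
    unfolding U using dj by (intro finite_measure_finite_Union) auto
  ultimately show ?thesis unfolding cexp_def Ion_def[symmetric] using a0 n0 by (simp add: add.commute)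
qed



abbreviation "YD0 \<equiv> (\<lambda>\<omega>. D0 \<omega> * Y1 \<omega> + (1 - D0 \<omega>) * Y0 \<omega>)"

lemma int_YD0: "integrable M YD0"
proof -
  have "integrable M (\<lambda>\<omega>. Y0 \<omega> + D0 \<omega> * (Y1 \<omega> - Y0 \<omega>))"
    using int_treat[OF int_Dl, of 0] int_Y0 by simp
  then show ?thesis by (simp add: algebra_simps)
qed

lemma int_Yob: "integrable M Yob"
proof -
  have "integrable M (\<lambda>\<omega>. indicator (evt M (\<lambda>\<omega>. v (G \<omega>) (T \<omega>) \<le> V \<omega>)) \<omega> * (Y1 \<omega> - Y0 \<omega>))"
    by (rule Ion_integrable[OF _ int_Dl]) (intro evt_sets, measurable)
  then have "integrable M (\<lambda>\<omega>. Y0 \<omega> + indicator (evt M (\<lambda>\<omega>. v (G \<omega>) (T \<omega>) \<le> V \<omega>)) \<omega> * (Y1 \<omega> - Y0 \<omega>))"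
    using int_Y0 by simp
  moreover have "integrable M (\<lambda>\<omega>. Y0 \<omega> + indicator (evt M (\<lambda>\<omega>. v (G \<omega>) (T \<omega>) \<le> V \<omega>)) \<omega> * (Y1 \<omega> - Y0 \<omega>)) = integrable M Yob"
    by (rule Bochner_Integration.integrable_cong) (auto simp: yobs_def dobs_def treat_def evt_def algebra_simps)
  ultimately show ?thesis by simp
qed

lemma Ion_Y1split: "Ion M (evt M (\<lambda>\<omega>. G \<omega> = g \<and> T \<omega> = 1)) Yob
   = Ion M (evt M (\<lambda>\<omega>. G \<omega> = g \<and> T \<omega> = 1)) YD0 + Ion M (evt M (\<lambda>\<omega>. G \<omega> = g \<and> T \<omega> = 1)) (\<lambda>\<omega>. (D1 \<omega> - D0 \<omega>) * Dl \<omega>)"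
proof -
  have "Ion M (evt M (\<lambda>\<omega>. G \<omega> = g \<and> T \<omega> = 1)) Yob
     = Ion M (evt M (\<lambda>\<omega>. G \<omega> = g \<and> T \<omega> = 1)) (\<lambda>\<omega>. YD0 \<omega> + (D1 \<omega> - D0 \<omega>) * Dl \<omega>)"
    by (rule Ion_cong) (auto simp: evt_def yobs_def dobs_def algebra_simps)
  also have "\<dots> = Ion M (evt M (\<lambda>\<omega>. G \<omega> = g \<and> T \<omega> = 1)) YD0 + Ion M (evt M (\<lambda>\<omega>. G \<omega> = g \<and> T \<omega> = 1)) (\<lambda>\<omega>. (D1 \<omega> - D0 \<omega>) * Dl \<omega>)"
    by (intro Ion_add int_ind int_YD0 int_D10 int_Dl sets_GT)
  finally show ?thesis .
qed

lemma Ion_Y0: "Ion M (evt M (\<lambda>\<omega>. G \<omega> = g \<and> T \<omega> = 0)) Yob = Ion M (evt M (\<lambda>\<omega>. G \<omega> = g \<and> T \<omega> = 0)) YD0"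
  by (rule Ion_cong) (auto simp: evt_def yobs_def dobs_def)

lemma part_gen:
  assumes k: "0 < PG k"
    and iZ: "integrable M (\<lambda>\<omega>. indicator (evt M (\<lambda>\<omega>. T \<omega> = 0)) \<omega> * Z \<omega>)"
    and key: "\<And>g. g \<le> gbar \<Longrightarrow> gs g = k \<Longrightarrow>
      Ion M (evt M (\<lambda>\<omega>. G \<omega> = g \<and> T \<omega> = 0)) Z / Pt 0
        = Ion M (evt M (\<lambda>\<omega>. G \<omega> = g \<and> T \<omega> = 1)) YD0 / Pt 1 - \<kappa> * prob (evt M (\<lambda>\<omega>. G \<omega> = g))"
  shows "cexpGs M Gs T Yob k 1 - cexpGs M Gs T Z k 0
    = \<kappa> + (Ion M (evt M (\<lambda>\<omega>. Gs \<omega> = k \<and> T \<omega> = 1)) (\<lambda>\<omega>. (D1 \<omega> - D0 \<omega>) * Dl \<omega>) / Pt 1) / PG k"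
proof -
  have "cexpGs M Gs T Yob k 1 - cexpGs M Gs T Z k 0
    = \<kappa> + (\<Sum>g\<in>{g\<in>{..gbar}. gs g = k}. Ion M (evt M (\<lambda>\<omega>. G \<omega> = g \<and> T \<omega> = 1)) (\<lambda>\<omega>. (D1 \<omega> - D0 \<omega>) * Dl \<omega>) / Pt 1) / PG k"
  proof (rule combine[OF k int_ind[OF int_Yob sets_T] iZ])
    fix g assume g: "g \<le> gbar" "gs g = k"
    show "Ion M (evt M (\<lambda>\<omega>. G \<omega> = g \<and> T \<omega> = 1)) Yob / Pt 1 - Ion M (evt M (\<lambda>\<omega>. G \<omega> = g \<and> T \<omega> = 0)) Z / Pt 0
      = \<kappa> * prob (evt M (\<lambda>\<omega>. G \<omega> = g)) + Ion M (evt M (\<lambda>\<omega>. G \<omega> = g \<and> T \<omega> = 1)) (\<lambda>\<omega>. (D1 \<omega> - D0 \<omega>) * Dl \<omega>) / Pt 1"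
      unfolding key[OF g] Ion_Y1split by (simp add: add_divide_distrib)
  qed
  then show ?thesis unfolding sum_to_Gs[OF int_D10[OF int_Dl]] .
qed

lemma final_gen:
  assumes "W1 = (aa 1 / Pt 1 / PG 1) / (bb 1 / Pt 1 / PG 1)"
    and "Wm = (- aa (-1) / Pt 1 / PG (-1)) / (- bb (-1) / Pt 1 / PG (-1))"
  shows "w10 M Dob Gs T * W1 + (1 - w10 M Dob Gs T) * Wm = cexp M (evt M (\<lambda>\<omega>. D0 \<omega> \<noteq> D1 \<omega> \<and> T \<omega> = 1)) Dl"
proof -
  have p1: "0 < PG 1" using pos1 by (simp add: Gs_eq)
  have pm: "0 < PG (-1)" using posm1 by (simp add: Gs_eq)
  have d1: "cexpGs M Gs T Dob 1 1 - cexpGs M Gs T Dob 1 0 = bb 1 / Pt 1 / PG 1"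
    using Dd[OF p1] bb_Ion1 by simp
  have dm: "cexpGs M Gs T Dob (-1) 1 - cexpGs M Gs T Dob (-1) 0 = - bb (-1) / Pt 1 / PG (-1)"
    using Dd[OF pm] bb_Ionm1 by simp
  have w: "w10 M Dob Gs T = (bb 1 / Pt 1 / PG 1 - 0) * PG 1 / ((bb 1 / Pt 1 / PG 1 - 0) * PG 1 + (0 - (- bb (-1) / Pt 1 / PG (-1))) * PG (-1))"
    unfolding w10_def DIDs_def d1[symmetric] dm[symmetric] Dd0[symmetric] by simp
  show ?thesis unfolding w assms delta_star
    by (rule final_alg[OF bb1_pos bbm1_pos Pt_pos p1 pm]) simp
qed

lemma final_TC_like:
  assumes iZ: "integrable M (\<lambda>\<omega>. indicator (evt M (\<lambda>\<omega>. T \<omega> = 0)) \<omega> * Z \<omega>)"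
    and key: "\<And>g. g \<le> gbar \<Longrightarrow> gs g \<noteq> 0 \<Longrightarrow>
      Ion M (evt M (\<lambda>\<omega>. G \<omega> = g \<and> T \<omega> = 0)) Z / Pt 0 = Ion M (evt M (\<lambda>\<omega>. G \<omega> = g \<and> T \<omega> = 1)) YD0 / Pt 1"
  shows "w10 M Dob Gs T * ((cexpGs M Gs T Yob 1 1 - cexpGs M Gs T Z 1 0) / (cexpGs M Gs T Dob 1 1 - cexpGs M Gs T Dob 1 0))
     + (1 - w10 M Dob Gs T) * ((cexpGs M Gs T Yob (-1) 1 - cexpGs M Gs T Z (-1) 0) / (cexpGs M Gs T Dob (-1) 1 - cexpGs M Gs T Dob (-1) 0))
     = cexp M (evt M (\<lambda>\<omega>. D0 \<omega> \<noteq> D1 \<omega> \<and> T \<omega> = 1)) Dl"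
proof (rule final_gen)
  have p1: "0 < PG 1" using pos1 by (simp add: Gs_eq)
  have pm: "0 < PG (-1)" using posm1 by (simp add: Gs_eq)
  have n1: "cexpGs M Gs T Yob 1 1 - cexpGs M Gs T Z 1 0 = aa 1 / Pt 1 / PG 1"
    using part_gen[OF p1 iZ, of 0] key sw_pos[of Dl] by simp
  have nm: "cexpGs M Gs T Yob (-1) 1 - cexpGs M Gs T Z (-1) 0 = - aa (-1) / Pt 1 / PG (-1)"
    using part_gen[OF pm iZ, of 0] key sw_neg[of Dl] by simp
  have d1: "cexpGs M Gs T Dob 1 1 - cexpGs M Gs T Dob 1 0 = bb 1 / Pt 1 / PG 1"
    using Dd[OF p1] bb_Ion1 by simp
  have dm: "cexpGs M Gs T Dob (-1) 1 - cexpGs M Gs T Dob (-1) 0 = - bb (-1) / Pt 1 / PG (-1)"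
    using Dd[OF pm] bb_Ionm1 by simp
  show "(cexpGs M Gs T Yob 1 1 - cexpGs M Gs T Z 1 0) / (cexpGs M Gs T Dob 1 1 - cexpGs M Gs T Dob 1 0) = (aa 1 / Pt 1 / PG 1) / (bb 1 / Pt 1 / PG 1)"
    unfolding n1 d1 ..
  show "(cexpGs M Gs T Yob (-1) 1 - cexpGs M Gs T Z (-1) 0) / (cexpGs M Gs T Dob (-1) 1 - cexpGs M Gs T Dob (-1) 0) = (- aa (-1) / Pt 1 / PG (-1)) / (- bb (-1) / Pt 1 / PG (-1))"
    unfolding nm dm ..
qed



lemma PGD0T: "prob (evt M (\<lambda>\<omega>. G \<omega> = g \<and> T \<omega> = t \<and> D0 \<omega> = e)) = prob (evt M (\<lambda>\<omega>. G \<omega> = g \<and> D0 \<omega> = e)) * Pt t"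
proof -
  have B: "{x. (if v g 0 \<le> x then 1 else 0) = e} \<in> sets borel" by measurable
  have "evt M (\<lambda>\<omega>. G \<omega> = g \<and> T \<omega> = t \<and> D0 \<omega> = e) = evt M (\<lambda>\<omega>. V \<omega> \<in> {x. (if v g 0 \<le> x then 1 else 0) = e} \<and> G \<omega> = g \<and> T \<omega> = t)"
    "evt M (\<lambda>\<omega>. G \<omega> = g \<and> D0 \<omega> = e) = evt M (\<lambda>\<omega>. V \<omega> \<in> {x. (if v g 0 \<le> x then 1 else 0) = e} \<and> G \<omega> = g)"
    by (auto simp: evt_def treat_def)
  then show ?thesis using VGT[OF B] by simp
qed

lemma sets_GTD0[measurable]: "evt M (\<lambda>\<omega>. G \<omega> = g \<and> T \<omega> = t \<and> D0 \<omega> = e) \<in> sets M"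
  by (intro evt_sets) measurable

lemma Ion_D0X: "Ion M (evt M (\<lambda>\<omega>. G \<omega> = g \<and> T \<omega> = t)) (\<lambda>\<omega>. D0 \<omega> * X \<omega>)
   = cexp M (evt M (\<lambda>\<omega>. G \<omega> = g \<and> T \<omega> = t \<and> D0 \<omega> = 1)) X * prob (evt M (\<lambda>\<omega>. G \<omega> = g \<and> D0 \<omega> = 1)) * Pt t"
proof -
  have "Ion M (evt M (\<lambda>\<omega>. G \<omega> = g \<and> T \<omega> = t)) (\<lambda>\<omega>. D0 \<omega> * X \<omega>) = Ion M (evt M (\<lambda>\<omega>. G \<omega> = g \<and> T \<omega> = t \<and> D0 \<omega> = 1)) X"
    by (rule Ion_cong2) (auto simp: evt_def treat_def indicator_def)
  then show ?thesis unfolding cexp_Ion[OF sets_GTD0] PGD0T by (simp add: mult.assoc)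
qed

lemma Ion_GT_cexp: "Ion M (evt M (\<lambda>\<omega>. G \<omega> = g \<and> T \<omega> = t)) X = cexp M (evt M (\<lambda>\<omega>. G \<omega> = g \<and> T \<omega> = t)) X * prob (evt M (\<lambda>\<omega>. G \<omega> = g)) * Pt t"
  unfolding cexp_Ion[OF sets_GT] GT_prod by (simp add: mult.assoc)

lemma PG0_pos: "0 < PG 0"
proof -
  obtain g where g: "g \<le> gbar" "EDgt M Dob G T g 1 = EDgt M Dob G T g 0" using Gs_ne by blast
  then have g0: "gs g = 0" by (simp add: gs_def)
  have "prob (evt M (\<lambda>\<omega>. G \<omega> = g)) \<le> PG 0"
    unfolding PG_sum[of 0] using g g0 by (intro member_le_sum) auto
  then show ?thesis using G_pos[OF g(1)] by simp
qed

lemma part1: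
  assumes A3: "\<forall>g\<le>gbar. \<forall>g'\<le>gbar.
           cexp M (evt M (\<lambda>\<omega>. G \<omega> = g \<and> T \<omega> = 1)) Y0 - cexp M (evt M (\<lambda>\<omega>. G \<omega> = g \<and> T \<omega> = 0)) Y0
         = cexp M (evt M (\<lambda>\<omega>. G \<omega> = g' \<and> T \<omega> = 1)) Y0 - cexp M (evt M (\<lambda>\<omega>. G \<omega> = g' \<and> T \<omega> = 0)) Y0"
    and A4: "\<forall>g\<le>gbar.
           cexp M (evt M (\<lambda>\<omega>. G \<omega> = g \<and> T \<omega> = 1 \<and> D0 \<omega> = 1)) (\<lambda>\<omega>. Y1 \<omega> - Y0 \<omega>)
         = cexp M (evt M (\<lambda>\<omega>. G \<omega> = g \<and> T \<omega> = 0 \<and> D0 \<omega> = 1)) (\<lambda>\<omega>. Y1 \<omega> - Y0 \<omega>)"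
  shows "w10 M Dob Gs T * W_DID M Dob Gs T Yob 1 0 + (1 - w10 M Dob Gs T) * W_DID M Dob Gs T Yob (-1) 0
     = cexp M (evt M (\<lambda>\<omega>. D0 \<omega> \<noteq> D1 \<omega> \<and> T \<omega> = 1)) Dl"
proof -
  define c where "c = cexp M (evt M (\<lambda>\<omega>. G \<omega> = 0 \<and> T \<omega> = 1)) Y0 - cexp M (evt M (\<lambda>\<omega>. G \<omega> = 0 \<and> T \<omega> = 0)) Y0"
  have p0: "0 < Pt 0" and p1: "0 < Pt 1" using Pt_pos by auto
  have key: "Ion M (evt M (\<lambda>\<omega>. G \<omega> = g \<and> T \<omega> = 0)) Yob / Pt 0
        = Ion M (evt M (\<lambda>\<omega>. G \<omega> = g \<and> T \<omega> = 1)) YD0 / Pt 1 - c * prob (evt M (\<lambda>\<omega>. G \<omega> = g))"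
    if g: "g \<le> gbar" for g
  proof -
    have split: "Ion M (evt M (\<lambda>\<omega>. G \<omega> = g \<and> T \<omega> = t)) YD0
       = Ion M (evt M (\<lambda>\<omega>. G \<omega> = g \<and> T \<omega> = t)) Y0 + Ion M (evt M (\<lambda>\<omega>. G \<omega> = g \<and> T \<omega> = t)) (\<lambda>\<omega>. D0 \<omega> * Dl \<omega>)" for t
    proof -
      have "Ion M (evt M (\<lambda>\<omega>. G \<omega> = g \<and> T \<omega> = t)) YD0 = Ion M (evt M (\<lambda>\<omega>. G \<omega> = g \<and> T \<omega> = t)) (\<lambda>\<omega>. Y0 \<omega> + D0 \<omega> * Dl \<omega>)"
        by (rule Ion_cong) (simp add: algebra_simps)
      also have "\<dots> = Ion M (evt M (\<lambda>\<omega>. G \<omega> = g \<and> T \<omega> = t)) Y0 + Ion M (evt M (\<lambda>\<omega>. G \<omega> = g \<and> T \<omega> = t)) (\<lambda>\<omega>. D0 \<omega> * Dl \<omega>)"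
        by (intro Ion_add int_ind int_Y0 int_treat int_Dl sets_GT)
      finally show ?thesis .
    qed
    have c: "cexp M (evt M (\<lambda>\<omega>. G \<omega> = g \<and> T \<omega> = 1)) Y0 - cexp M (evt M (\<lambda>\<omega>. G \<omega> = g \<and> T \<omega> = 0)) Y0 = c"
      unfolding c_def using A3[rule_format, OF g, of 0] by simp
    have d: "cexp M (evt M (\<lambda>\<omega>. G \<omega> = g \<and> T \<omega> = 1 \<and> D0 \<omega> = 1)) Dl = cexp M (evt M (\<lambda>\<omega>. G \<omega> = g \<and> T \<omega> = 0 \<and> D0 \<omega> = 1)) Dl"
      using A4[rule_format, OF g] .
    show ?thesis
      unfolding Ion_Y0 split Ion_GT_cexp[of g _ Y0] Ion_D0X c[symmetric] d using p0 p1
      by (rule alg2)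
  qed
  have p1': "0 < PG 1" using pos1 by (simp add: Gs_eq)
  have pm: "0 < PG (-1)" using posm1 by (simp add: Gs_eq)
  have iY: "integrable M (\<lambda>\<omega>. indicator (evt M (\<lambda>\<omega>. T \<omega> = 0)) \<omega> * Yob \<omega>)" by (intro int_ind int_Yob sets_T)
  have n1: "cexpGs M Gs T Yob 1 1 - cexpGs M Gs T Yob 1 0 = c + aa 1 / Pt 1 / PG 1"
  proof -
    have "cexpGs M Gs T Yob 1 1 - cexpGs M Gs T Yob 1 0 = c + (Ion M (evt M (\<lambda>\<omega>. Gs \<omega> = 1 \<and> T \<omega> = 1)) (\<lambda>\<omega>. (D1 \<omega> - D0 \<omega>) * Dl \<omega>) / Pt 1) / PG 1"
      by (rule part_gen[OF p1' iY]) (rule key)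
    then show ?thesis unfolding sw_pos .
  qed
  have nm: "cexpGs M Gs T Yob (-1) 1 - cexpGs M Gs T Yob (-1) 0 = c + - aa (-1) / Pt 1 / PG (-1)"
  proof -
    have "cexpGs M Gs T Yob (-1) 1 - cexpGs M Gs T Yob (-1) 0 = c + (Ion M (evt M (\<lambda>\<omega>. Gs \<omega> = -1 \<and> T \<omega> = 1)) (\<lambda>\<omega>. (D1 \<omega> - D0 \<omega>) * Dl \<omega>) / Pt 1) / PG (-1)"
      by (rule part_gen[OF pm iY]) (rule key)
    then show ?thesis unfolding sw_neg by simp
  qed
  have n0: "cexpGs M Gs T Yob 0 1 - cexpGs M Gs T Yob 0 0 = c"
  proof -
    have "cexpGs M Gs T Yob 0 1 - cexpGs M Gs T Yob 0 0 = c + (Ion M (evt M (\<lambda>\<omega>. Gs \<omega> = 0 \<and> T \<omega> = 1)) (\<lambda>\<omega>. (D1 \<omega> - D0 \<omega>) * Dl \<omega>) / Pt 1) / PG 0"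
      by (rule part_gen[OF PG0_pos iY]) (rule key)
    then show ?thesis unfolding sw_zero by simp
  qed
  have d1: "cexpGs M Gs T Dob 1 1 - cexpGs M Gs T Dob 1 0 = bb 1 / Pt 1 / PG 1"
    using Dd[OF p1'] bb_Ion1 by simp
  have dm: "cexpGs M Gs T Dob (-1) 1 - cexpGs M Gs T Dob (-1) 0 = - bb (-1) / Pt 1 / PG (-1)"
    using Dd[OF pm] bb_Ionm1 by simp
  show ?thesis
  proof (rule final_gen)
    show "W_DID M Dob Gs T Yob 1 0 = aa 1 / Pt 1 / PG 1 / (bb 1 / Pt 1 / PG 1)"
      unfolding W_DID_def DIDs_def n1 n0 d1 Dd0 by simp
    show "W_DID M Dob Gs T Yob (-1) 0 = - aa (-1) / Pt 1 / PG (-1) / (- bb (-1) / Pt 1 / PG (-1))"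
      unfolding W_DID_def DIDs_def nm n0 dm Dd0 by simp
  qed
qed



abbreviation "Yd d \<equiv> (if d = (0::nat) then Y0 else Y1)"
abbreviation "rr g d \<equiv> prob (evt M (\<lambda>\<omega>. G \<omega> = g \<and> D0 \<omega> = real d))"
abbreviation "cgt g t d \<equiv> cexp M (evt M (\<lambda>\<omega>. G \<omega> = g \<and> T \<omega> = t \<and> D0 \<omega> = real d)) (Yd d)"

lemma int_Yd: "integrable M (Yd d)" using int_Y0 int_Y1 by simp

lemma sets_GsTD0[measurable]: "evt M (\<lambda>\<omega>. Gs \<omega> = k \<and> T \<omega> = t \<and> D0 \<omega> = e) \<in> sets M"
  by (intro evt_sets) measurable

lemma Ion_Gs_sumD: assumes "integrable M X"
  shows "Ion M (evt M (\<lambda>\<omega>. Gs \<omega> = k \<and> T \<omega> = t \<and> D0 \<omega> = e)) X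
    = (\<Sum>g\<in>{g\<in>{..gbar}. gs g = k}. Ion M (evt M (\<lambda>\<omega>. G \<omega> = g \<and> T \<omega> = t \<and> D0 \<omega> = e)) X)"
proof -
  have "Ion M (evt M (\<lambda>\<omega>. Gs \<omega> = k \<and> T \<omega> = t \<and> D0 \<omega> = e)) X
     = Ion M (evt M (\<lambda>\<omega>. (\<lambda>g \<omega>. gs g = k \<and> T \<omega> = t \<and> D0 \<omega> = e) (G \<omega>) \<omega>)) X"
    by (simp add: Gs_eq)
  also have "\<dots> = (\<Sum>g\<le>gbar. Ion M (evt M (\<lambda>\<omega>. G \<omega> = g \<and> gs g = k \<and> T \<omega> = t \<and> D0 \<omega> = e)) X)"
  proof (rule Ion_groups)
    fix g
    show "integrable M (\<lambda>\<omega>. indicator (evt M (\<lambda>\<omega>. G \<omega> = g \<and> gs g = k \<and> T \<omega> = t \<and> D0 \<omega> = e)) \<omega> * X \<omega>)"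
      by (rule int_ind[OF assms]) (intro evt_sets, measurable)
  qed
  also have "\<dots> = (\<Sum>g\<le>gbar. if gs g = k then Ion M (evt M (\<lambda>\<omega>. G \<omega> = g \<and> T \<omega> = t \<and> D0 \<omega> = e)) X else 0)"
    by (intro sum.cong refl) (auto simp: evt_def Ion_def)
  also have "\<dots> = (\<Sum>g\<in>{g\<in>{..gbar}. gs g = k}. Ion M (evt M (\<lambda>\<omega>. G \<omega> = g \<and> T \<omega> = t \<and> D0 \<omega> = e)) X)"
    by (rule sum.inter_filter[symmetric]) simp
  finally show ?thesis .
qed

lemma Ion_GTD0: "Ion M (evt M (\<lambda>\<omega>. G \<omega> = g \<and> T \<omega> = t \<and> D0 \<omega> = e)) X
   = cexp M (evt M (\<lambda>\<omega>. G \<omega> = g \<and> T \<omega> = t \<and> D0 \<omega> = e)) X * prob (evt M (\<lambda>\<omega>. G \<omega> = g \<and> D0 \<omega> = e)) * Pt t"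
  unfolding cexp_Ion[OF sets_GTD0] PGD0T by (simp add: mult.assoc)

lemma sets_cell0[measurable]: "cell0 M Dob Gs T e t \<in> sets M"
  unfolding cell0_def by (intro evt_sets) measurable

lemma cell0_AE: assumes d: "d \<le> 1" and t: "t \<le> 1"
  and X: "X \<in> borel_measurable M" and X': "X' \<in> borel_measurable M"
    and XX: "\<And>\<omega>. \<omega> \<in> space M \<Longrightarrow> Gs \<omega> = 0 \<Longrightarrow> T \<omega> = t \<Longrightarrow> D0 \<omega> = D1 \<omega> \<Longrightarrow> D0 \<omega> = real d \<Longrightarrow> X \<omega> = X' \<omega>"
  shows "Ion M (cell0 M Dob Gs T (real d) t) X = Ion M (evt M (\<lambda>\<omega>. Gs \<omega> = 0 \<and> T \<omega> = t \<and> D0 \<omega> = real d)) X'"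
proof (rule Ion_AE_cong[OF _ _ sw0_null])
  show "(\<lambda>\<omega>. indicator (cell0 M Dob Gs T (real d) t) \<omega> * X \<omega>) \<in> borel_measurable M" using X by measurable
  show "(\<lambda>\<omega>. indicator (evt M (\<lambda>\<omega>. Gs \<omega> = 0 \<and> T \<omega> = t \<and> D0 \<omega> = real d)) \<omega> * X' \<omega>) \<in> borel_measurable M"
    using X' by measurable
  fix \<omega> assume w: "\<omega> \<in> space M" and nN: "\<omega> \<notin> evt M (\<lambda>\<omega>. Gs \<omega> = 0 \<and> D0 \<omega> \<noteq> D1 \<omega>)"
  show "indicator (cell0 M Dob Gs T (real d) t) \<omega> * X \<omega> = indicator (evt M (\<lambda>\<omega>. Gs \<omega> = 0 \<and> T \<omega> = t \<and> D0 \<omega> = real d)) \<omega> * X' \<omega>"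
  proof (cases "Gs \<omega> = 0 \<and> T \<omega> = t")
    case True
    then have eq: "D0 \<omega> = D1 \<omega>" using nN w by (auto simp: evt_def)
    have Dob: "Dob \<omega> = D0 \<omega>"
    proof (cases "t = 0")
      case True then show ?thesis using \<open>Gs \<omega> = 0 \<and> T \<omega> = t\<close> by (simp add: dobs_def)
    next
      case False then have "t = 1" using t by simp
      then show ?thesis using \<open>Gs \<omega> = 0 \<and> T \<omega> = t\<close> eq by (simp add: dobs_def)
    qed
    show ?thesis
    proof (cases "D0 \<omega> = real d")
      case c: True
      then show ?thesis using XX[OF w _ _ eq c] True w Dob by (simp add: cell0_def evt_def)
    next
      case False
      then show ?thesis using True w Dob by (simp add: cell0_def evt_def)
    qed
  next
    case False
    then show ?thesis by (auto simp: cell0_def evt_def)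
  qed
qed

lemma cell0_prob: assumes d: "d \<le> 1" and t: "t \<le> 1"
  shows "prob (cell0 M Dob Gs T (real d) t) = (\<Sum>g\<in>{g\<in>{..gbar}. gs g = 0}. rr g d) * Pt t"
proof -
  have "prob (cell0 M Dob Gs T (real d) t) = Ion M (cell0 M Dob Gs T (real d) t) (\<lambda>_. 1)"
    by (simp add: Ion_one)
  also have "\<dots> = Ion M (evt M (\<lambda>\<omega>. Gs \<omega> = 0 \<and> T \<omega> = t \<and> D0 \<omega> = real d)) (\<lambda>_. 1)"
    by (rule cell0_AE[OF d t]) auto
  also have "\<dots> = (\<Sum>g\<in>{g\<in>{..gbar}. gs g = 0}. Ion M (evt M (\<lambda>\<omega>. G \<omega> = g \<and> T \<omega> = t \<and> D0 \<omega> = real d)) (\<lambda>_. 1))"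
    by (rule Ion_Gs_sumD) simp
  also have "\<dots> = (\<Sum>g\<in>{g\<in>{..gbar}. gs g = 0}. rr g d * Pt t)"
    by (intro sum.cong refl) (simp add: Ion_one PGD0T)
  finally show ?thesis by (simp add: sum_distrib_right)
qed

lemma cell0_Yob: assumes d: "d \<le> 1" and t: "t \<le> 1"
  shows "Ion M (cell0 M Dob Gs T (real d) t) Yob = (\<Sum>g\<in>{g\<in>{..gbar}. gs g = 0}. cgt g t d * rr g d) * Pt t"
proof -
  have "Ion M (cell0 M Dob Gs T (real d) t) Yob = Ion M (evt M (\<lambda>\<omega>. Gs \<omega> = 0 \<and> T \<omega> = t \<and> D0 \<omega> = real d)) (Yd d)"
  proof (rule cell0_AE[OF d t])
    show "Yd d \<in> borel_measurable M" by simp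
    fix \<omega> assume "\<omega> \<in> space M" "Gs \<omega> = 0" and Tw: "T \<omega> = t" and eq: "D0 \<omega> = D1 \<omega>" and dd: "D0 \<omega> = real d"
    have Dob: "Dob \<omega> = D0 \<omega>"
    proof (cases "t = 0")
      case True then show ?thesis using Tw by (simp add: dobs_def)
    next
      case False then have "t = 1" using t by simp
      then show ?thesis using Tw eq by (simp add: dobs_def)
    qed
    then have "Yob \<omega> = D0 \<omega> * Y1 \<omega> + (1 - D0 \<omega>) * Y0 \<omega>" by (simp add: yobs_def)
    moreover have "d = 0 \<or> d = 1" using d by auto
    ultimately show "Yob \<omega> = Yd d \<omega>" using dd by auto
  qed simp
  also have "\<dots> = (\<Sum>g\<in>{g\<in>{..gbar}. gs g = 0}. Ion M (evt M (\<lambda>\<omega>. G \<omega> = g \<and> T \<omega> = t \<and> D0 \<omega> = real d)) (Yd d))"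
    by (rule Ion_Gs_sumD[OF int_Yd])
  also have "\<dots> = (\<Sum>g\<in>{g\<in>{..gbar}. gs g = 0}. cgt g t d * rr g d * Pt t)"
    by (intro sum.cong refl) (simp only: Ion_GTD0)
  finally show ?thesis by (simp add: sum_distrib_right)
qed



lemma delta_eq:
  assumes A3': "\<forall>d\<in>{0::nat,1}. \<forall>g\<le>gbar. \<forall>g'\<le>gbar.
           0 < measure M (evt M (\<lambda>\<omega>. G \<omega> = g \<and> D0 \<omega> = real d)) \<longrightarrow>
           0 < measure M (evt M (\<lambda>\<omega>. G \<omega> = g' \<and> D0 \<omega> = real d)) \<longrightarrow>
           cexp M (evt M (\<lambda>\<omega>. G \<omega> = g \<and> T \<omega> = 1 \<and> D0 \<omega> = real d)) (if d = 0 then Y0 else Y1)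
             - cexp M (evt M (\<lambda>\<omega>. G \<omega> = g \<and> T \<omega> = 0 \<and> D0 \<omega> = real d)) (if d = 0 then Y0 else Y1)
         = cexp M (evt M (\<lambda>\<omega>. G \<omega> = g' \<and> T \<omega> = 1 \<and> D0 \<omega> = real d)) (if d = 0 then Y0 else Y1)
             - cexp M (evt M (\<lambda>\<omega>. G \<omega> = g' \<and> T \<omega> = 0 \<and> D0 \<omega> = real d)) (if d = 0 then Y0 else Y1)"
    and H: "0 < prob (cell0 M Dob Gs T (real d) 1)"
    and d: "d \<le> 1" and g: "g \<le> gbar" and r: "0 < rr g d"
  shows "deltas M Dob Gs T Yob (real d) = cgt g 1 d - cgt g 0 d"
proof -
  let ?K = "{g\<in>{..gbar}. gs g = 0}"
  define R where "R = (\<Sum>g'\<in>?K. rr g' d)"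
  have dd: "d \<in> {0::nat,1}" using d by auto
  have S: "(\<Sum>g'\<in>?K. (cgt g' 1 d - cgt g' 0 d) * rr g' d) = (cgt g 1 d - cgt g 0 d) * R"
    unfolding R_def sum_distrib_left
  proof (intro sum.cong refl)
    fix g' assume "g' \<in> ?K"
    then have g': "g' \<le> gbar" by simp
    show "(cgt g' 1 d - cgt g' 0 d) * rr g' d = (cgt g 1 d - cgt g 0 d) * rr g' d"
    proof (cases "rr g' d = 0")
      case True then show ?thesis by simp
    next
      case False
      then have "0 < rr g' d" using measure_nonneg[of M "evt M (\<lambda>\<omega>. G \<omega> = g' \<and> D0 \<omega> = real d)"] by linarith
      then have "cgt g' 1 d - cgt g' 0 d = cgt g 1 d - cgt g 0 d"
        using A3'[rule_format, OF dd g' g] r by blast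
      then show ?thesis by simp
    qed
  qed
  have p1: "0 < Pt 1" and p0: "0 < Pt 0" using Pt_pos by auto
  have R: "0 < R" using H unfolding cell0_prob[OF d order_refl] R_def[symmetric] using p1
    by (simp add: zero_less_mult_iff)
  have c1: "cexp M (cell0 M Dob Gs T (real d) 1) Yob = (\<Sum>g'\<in>?K. cgt g' 1 d * rr g' d) / R"
    unfolding cexp_def Ion_def[symmetric] cell0_Yob[OF d order_refl] cell0_prob[OF d order_refl] R_def[symmetric]
    using p1 by simp
  have c0: "cexp M (cell0 M Dob Gs T (real d) 0) Yob = (\<Sum>g'\<in>?K. cgt g' 0 d * rr g' d) / R"
    unfolding cexp_def Ion_def[symmetric] cell0_Yob[OF d zero_le] cell0_prob[OF d zero_le] R_def[symmetric]
    using p0 by simp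
  have "deltas M Dob Gs T Yob (real d) = ((\<Sum>g'\<in>?K. cgt g' 1 d * rr g' d) - (\<Sum>g'\<in>?K. cgt g' 0 d * rr g' d)) / R"
    unfolding deltas_def cell0_def[symmetric] c1 c0 by (simp add: diff_divide_distrib)
  also have "\<dots> = (\<Sum>g'\<in>?K. (cgt g' 1 d - cgt g' 0 d) * rr g' d) / R"
    by (simp add: sum_subtractf left_diff_distrib)
  also have "\<dots> = cgt g 1 d - cgt g 0 d" unfolding S using R by simp
  finally show ?thesis .
qed



lemma int_Dob: "integrable M Dob"
  by (rule integrable_const_bound[where B=1]) (auto simp: dobs_def treat_def)

lemma Ion_dsplit: assumes "integrable M X1" "integrable M X0"
  shows "Ion M (evt M (\<lambda>\<omega>. G \<omega> = g \<and> T \<omega> = t)) (\<lambda>\<omega>. D0 \<omega> * X1 \<omega> + (1 - D0 \<omega>) * X0 \<omega>)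
    = Ion M (evt M (\<lambda>\<omega>. G \<omega> = g \<and> T \<omega> = t \<and> D0 \<omega> = 1)) X1 + Ion M (evt M (\<lambda>\<omega>. G \<omega> = g \<and> T \<omega> = t \<and> D0 \<omega> = 0)) X0"
proof -
  have i0: "integrable M (\<lambda>\<omega>. (1 - D0 \<omega>) * X0 \<omega>)"
    using int_treat[OF assms(2), of 0] assms(2) by (simp add: left_diff_distrib)
  have "Ion M (evt M (\<lambda>\<omega>. G \<omega> = g \<and> T \<omega> = t)) (\<lambda>\<omega>. D0 \<omega> * X1 \<omega> + (1 - D0 \<omega>) * X0 \<omega>)
    = Ion M (evt M (\<lambda>\<omega>. G \<omega> = g \<and> T \<omega> = t)) (\<lambda>\<omega>. D0 \<omega> * X1 \<omega>) + Ion M (evt M (\<lambda>\<omega>. G \<omega> = g \<and> T \<omega> = t)) (\<lambda>\<omega>. (1 - D0 \<omega>) * X0 \<omega>)"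
    by (intro Ion_add int_ind int_treat assms i0 sets_GT)
  also have "Ion M (evt M (\<lambda>\<omega>. G \<omega> = g \<and> T \<omega> = t)) (\<lambda>\<omega>. D0 \<omega> * X1 \<omega>) = Ion M (evt M (\<lambda>\<omega>. G \<omega> = g \<and> T \<omega> = t \<and> D0 \<omega> = 1)) X1"
    by (rule Ion_cong2) (auto simp: evt_def treat_def indicator_def)
  also have "Ion M (evt M (\<lambda>\<omega>. G \<omega> = g \<and> T \<omega> = t)) (\<lambda>\<omega>. (1 - D0 \<omega>) * X0 \<omega>) = Ion M (evt M (\<lambda>\<omega>. G \<omega> = g \<and> T \<omega> = t \<and> D0 \<omega> = 0)) X0"
    by (rule Ion_cong2) (auto simp: evt_def treat_def indicator_def)
  finally show ?thesis .
qed

lemma Ion_GTD0_zero: assumes "rr g d = 0"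
  shows "Ion M (evt M (\<lambda>\<omega>. G \<omega> = g \<and> T \<omega> = t \<and> D0 \<omega> = real d)) X = 0"
  by (rule Ion_null[OF sets_GTD0]) (simp add: PGD0T assms)

lemma TC_term:
  assumes A3': "\<forall>d\<in>{0::nat,1}. \<forall>g\<le>gbar. \<forall>g'\<le>gbar.
           0 < measure M (evt M (\<lambda>\<omega>. G \<omega> = g \<and> D0 \<omega> = real d)) \<longrightarrow>
           0 < measure M (evt M (\<lambda>\<omega>. G \<omega> = g' \<and> D0 \<omega> = real d)) \<longrightarrow>
           cexp M (evt M (\<lambda>\<omega>. G \<omega> = g \<and> T \<omega> = 1 \<and> D0 \<omega> = real d)) (if d = 0 then Y0 else Y1)
             - cexp M (evt M (\<lambda>\<omega>. G \<omega> = g \<and> T \<omega> = 0 \<and> D0 \<omega> = real d)) (if d = 0 then Y0 else Y1)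
         = cexp M (evt M (\<lambda>\<omega>. G \<omega> = g' \<and> T \<omega> = 1 \<and> D0 \<omega> = real d)) (if d = 0 then Y0 else Y1)
             - cexp M (evt M (\<lambda>\<omega>. G \<omega> = g' \<and> T \<omega> = 0 \<and> D0 \<omega> = real d)) (if d = 0 then Y0 else Y1)"
    and H1: "\<forall>d\<in>{0,1}. \<forall>t\<le>1. 0 < measure M (cell0 M Dob Gs T d t)"
    and d: "d \<le> 1" and g: "g \<le> gbar"
  shows "Ion M (evt M (\<lambda>\<omega>. G \<omega> = g \<and> T \<omega> = 0 \<and> D0 \<omega> = real d)) (\<lambda>\<omega>. Yd d \<omega> + deltas M Dob Gs T Yob (real d)) / Pt 0
    = Ion M (evt M (\<lambda>\<omega>. G \<omega> = g \<and> T \<omega> = 1 \<and> D0 \<omega> = real d)) (Yd d) / Pt 1"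
proof (cases "rr g d = 0")
  case True then show ?thesis by (simp add: Ion_GTD0_zero)
next
  case False
  then have r: "0 < rr g d" using measure_nonneg[of M "evt M (\<lambda>\<omega>. G \<omega> = g \<and> D0 \<omega> = real d)"] by linarith
  have rd: "real d \<in> {0,1}" using d by auto
  have H: "0 < prob (cell0 M Dob Gs T (real d) 1)" using H1 rd by auto
  have de: "deltas M Dob Gs T Yob (real d) = cgt g 1 d - cgt g 0 d" by (rule delta_eq[OF A3' H d g r])
  have p1: "0 < Pt 1" and p0: "0 < Pt 0" using Pt_pos by auto
  have "Ion M (evt M (\<lambda>\<omega>. G \<omega> = g \<and> T \<omega> = 0 \<and> D0 \<omega> = real d)) (\<lambda>\<omega>. Yd d \<omega> + deltas M Dob Gs T Yob (real d))
     = Ion M (evt M (\<lambda>\<omega>. G \<omega> = g \<and> T \<omega> = 0 \<and> D0 \<omega> = real d)) (\<lambda>\<omega>. Yd d \<omega> + deltas M Dob Gs T Yob (real d) * 1)"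
    by simp
  also have "\<dots> = Ion M (evt M (\<lambda>\<omega>. G \<omega> = g \<and> T \<omega> = 0 \<and> D0 \<omega> = real d)) (Yd d)
       + Ion M (evt M (\<lambda>\<omega>. G \<omega> = g \<and> T \<omega> = 0 \<and> D0 \<omega> = real d)) (\<lambda>\<omega>. deltas M Dob Gs T Yob (real d) * 1)"
    by (intro Ion_add int_ind int_Yd sets_GTD0 integrable_const)
  also have "Ion M (evt M (\<lambda>\<omega>. G \<omega> = g \<and> T \<omega> = 0 \<and> D0 \<omega> = real d)) (\<lambda>\<omega>. deltas M Dob Gs T Yob (real d) * 1)
     = deltas M Dob Gs T Yob (real d) * (rr g d * Pt 0)"
    unfolding Ion_cmult Ion_one[OF sets_GTD0] PGD0T ..
  finally show ?thesis unfolding Ion_GTD0 de using p0 p1 by (simp add: field_simps)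
qed

lemma part2:
  assumes H1: "\<forall>d\<in>{0,1}. \<forall>t\<le>1. 0 < measure M (cell0 M Dob Gs T d t)"
    and A3': "\<forall>d\<in>{0::nat,1}. \<forall>g\<le>gbar. \<forall>g'\<le>gbar.
           0 < measure M (evt M (\<lambda>\<omega>. G \<omega> = g \<and> D0 \<omega> = real d)) \<longrightarrow>
           0 < measure M (evt M (\<lambda>\<omega>. G \<omega> = g' \<and> D0 \<omega> = real d)) \<longrightarrow>
           cexp M (evt M (\<lambda>\<omega>. G \<omega> = g \<and> T \<omega> = 1 \<and> D0 \<omega> = real d)) (if d = 0 then Y0 else Y1)
             - cexp M (evt M (\<lambda>\<omega>. G \<omega> = g \<and> T \<omega> = 0 \<and> D0 \<omega> = real d)) (if d = 0 then Y0 else Y1)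
         = cexp M (evt M (\<lambda>\<omega>. G \<omega> = g' \<and> T \<omega> = 1 \<and> D0 \<omega> = real d)) (if d = 0 then Y0 else Y1)
             - cexp M (evt M (\<lambda>\<omega>. G \<omega> = g' \<and> T \<omega> = 0 \<and> D0 \<omega> = real d)) (if d = 0 then Y0 else Y1)"
  shows "w10 M Dob Gs T * W_TC M Dob Gs T Yob 1 + (1 - w10 M Dob Gs T) * W_TC M Dob Gs T Yob (-1)
     = cexp M (evt M (\<lambda>\<omega>. D0 \<omega> \<noteq> D1 \<omega> \<and> T \<omega> = 1)) Dl"
proof -
  let ?Z = "\<lambda>\<omega>. Yob \<omega> + deltas M Dob Gs T Yob (Dob \<omega>)"
  let ?d0 = "deltas M Dob Gs T Yob 0" and ?d1 = "deltas M Dob Gs T Yob 1"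
  have iZ': "integrable M (\<lambda>\<omega>. Yob \<omega> + (?d0 + Dob \<omega> * (?d1 - ?d0)))"
    using int_Yob int_Dob by simp
  have "integrable M (\<lambda>\<omega>. Yob \<omega> + (?d0 + Dob \<omega> * (?d1 - ?d0))) = integrable M ?Z"
    by (rule Bochner_Integration.integrable_cong) (auto simp: dobs_def treat_def)
  then have iZ: "integrable M (\<lambda>\<omega>. indicator (evt M (\<lambda>\<omega>. T \<omega> = 0)) \<omega> * ?Z \<omega>)"
    using iZ' by (intro int_ind sets_T) simp
  have key: "Ion M (evt M (\<lambda>\<omega>. G \<omega> = g \<and> T \<omega> = 0)) ?Z / Pt 0 = Ion M (evt M (\<lambda>\<omega>. G \<omega> = g \<and> T \<omega> = 1)) YD0 / Pt 1"
    if g: "g \<le> gbar" for g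
  proof -
    have "Ion M (evt M (\<lambda>\<omega>. G \<omega> = g \<and> T \<omega> = 0)) ?Z
      = Ion M (evt M (\<lambda>\<omega>. G \<omega> = g \<and> T \<omega> = 0)) (\<lambda>\<omega>. D0 \<omega> * (Y1 \<omega> + ?d1) + (1 - D0 \<omega>) * (Y0 \<omega> + ?d0))"
      by (rule Ion_cong) (auto simp: evt_def yobs_def dobs_def treat_def)
    also have "\<dots> = Ion M (evt M (\<lambda>\<omega>. G \<omega> = g \<and> T \<omega> = 0 \<and> D0 \<omega> = 1)) (\<lambda>\<omega>. Y1 \<omega> + ?d1)
       + Ion M (evt M (\<lambda>\<omega>. G \<omega> = g \<and> T \<omega> = 0 \<and> D0 \<omega> = 0)) (\<lambda>\<omega>. Y0 \<omega> + ?d0)"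
      by (rule Ion_dsplit) (use int_Y0 int_Y1 in simp_all)
    finally have l: "Ion M (evt M (\<lambda>\<omega>. G \<omega> = g \<and> T \<omega> = 0)) ?Z / Pt 0
       = Ion M (evt M (\<lambda>\<omega>. G \<omega> = g \<and> T \<omega> = 0 \<and> D0 \<omega> = 1)) (\<lambda>\<omega>. Y1 \<omega> + ?d1) / Pt 0
       + Ion M (evt M (\<lambda>\<omega>. G \<omega> = g \<and> T \<omega> = 0 \<and> D0 \<omega> = 0)) (\<lambda>\<omega>. Y0 \<omega> + ?d0) / Pt 0"
      by (simp add: add_divide_distrib)
    have r: "Ion M (evt M (\<lambda>\<omega>. G \<omega> = g \<and> T \<omega> = 1)) YD0 / Pt 1
       = Ion M (evt M (\<lambda>\<omega>. G \<omega> = g \<and> T \<omega> = 1 \<and> D0 \<omega> = 1)) Y1 / Pt 1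
       + Ion M (evt M (\<lambda>\<omega>. G \<omega> = g \<and> T \<omega> = 1 \<and> D0 \<omega> = 0)) Y0 / Pt 1"
      unfolding Ion_dsplit[OF int_Y1 int_Y0] by (simp add: add_divide_distrib)
    show ?thesis unfolding l r
      using TC_term[OF A3' H1 _ g, of 1] TC_term[OF A3' H1 _ g, of 0] by simp
  qed
  show ?thesis unfolding W_TC_def
    by (rule final_TC_like[OF iZ key]) simp
qed



end

locale T4c = T4 +
  fixes U :: "nat \<Rightarrow> 'a \<Rightarrow> real" and h :: "nat \<Rightarrow> real \<Rightarrow> nat \<Rightarrow> real"
  assumes H1: "\<forall>d\<in>{0,1}. \<forall>t\<le>1. 0 < measure M (cell0 M (dobs v V G T) (gstar M (dobs v V G T) G T) T d t)"
    and IQ: "integrable M (\<lambda>\<omega>. indicator (evt M (\<lambda>\<omega>. T \<omega> = 0)) \<omega> * Qs M (dobs v V G T) (gstar M (dobs v V G T) G T) T (yobs (dobs v V G T) Y0 Y1) (dobs v V G T \<omega>) (yobs (dobs v V G T) Y0 Y1 \<omega>))"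
    and mU: "\<forall>d\<le>1. U d \<in> borel_measurable M"
    and rep: "\<forall>d\<le>1. \<forall>\<omega>\<in>space M. (if d = 0 then Y0 \<omega> else Y1 \<omega>) = h d (U d \<omega>) (T \<omega>)"
    and smh: "\<forall>d\<le>1. \<forall>t\<le>1. strict_mono (\<lambda>u. h d u t)"
    and indU: "\<forall>d\<le>1. \<forall>B\<in>sets borel. \<forall>g t e.
           measure M (evt M (\<lambda>\<omega>. U d \<omega> \<in> B \<and> T \<omega> = t \<and> G \<omega> = g \<and> treat v V G 0 \<omega> = e))
             * measure M (evt M (\<lambda>\<omega>. G \<omega> = g \<and> treat v V G 0 \<omega> = e))
         = measure M (evt M (\<lambda>\<omega>. U d \<omega> \<in> B \<and> G \<omega> = g \<and> treat v V G 0 \<omega> = e))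
             * measure M (evt M (\<lambda>\<omega>. T \<omega> = t \<and> G \<omega> = g \<and> treat v V G 0 \<omega> = e))"
    and clS: "closed (csupp M (space M) (yobs (dobs v V G T) Y0 Y1))"
    and intS: "is_interval (csupp M (space M) (yobs (dobs v V G T) Y0 Y1))"
    and cells: "\<forall>d\<in>{0,1}. \<forall>g\<le>gbar. \<forall>t\<le>1.
           0 < measure M (evt M (\<lambda>\<omega>. dobs v V G T \<omega> = d \<and> G \<omega> = g \<and> T \<omega> = t)) \<longrightarrow>
             csupp M (evt M (\<lambda>\<omega>. dobs v V G T \<omega> = d \<and> G \<omega> = g \<and> T \<omega> = t)) (yobs (dobs v V G T) Y0 Y1) = csupp M (space M) (yobs (dobs v V G T) Y0 Y1)
           \<and> continuous_on UNIV (ccdf M (evt M (\<lambda>\<omega>. dobs v V G T \<omega> = d \<and> G \<omega> = g \<and> T \<omega> = t)) (yobs (dobs v V G T) Y0 Y1))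
           \<and> strict_mono_on (csupp M (space M) (yobs (dobs v V G T) Y0 Y1)) (ccdf M (evt M (\<lambda>\<omega>. dobs v V G T \<omega> = d \<and> G \<omega> = g \<and> T \<omega> = t)) (yobs (dobs v V G T) Y0 Y1))"
begin

abbreviation "S \<equiv> csupp M (space M) Yob"
abbreviation "Ft t d \<equiv> ccdf M (cell0 M Dob Gs T (real d) t) Yob"
abbreviation "Cg d g t \<equiv> evt M (\<lambda>\<omega>. Dob \<omega> = real d \<and> G \<omega> = g \<and> T \<omega> = t)"
abbreviation "K0 \<equiv> {g\<in>{..gbar}. gs g = 0}"

lemma mUd[measurable]: "d \<le> 1 \<Longrightarrow> U d \<in> borel_measurable M" using mU by auto

lemma UT: assumes d: "d \<le> 1" and B: "B \<in> sets borel"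
  shows "prob (evt M (\<lambda>\<omega>. U d \<omega> \<in> B \<and> T \<omega> = t \<and> G \<omega> = g \<and> D0 \<omega> = e))
    = prob (evt M (\<lambda>\<omega>. U d \<omega> \<in> B \<and> G \<omega> = g \<and> D0 \<omega> = e)) * Pt t"
proof (cases "prob (evt M (\<lambda>\<omega>. G \<omega> = g \<and> D0 \<omega> = e)) = 0")
  case True
  have s0: "evt M (\<lambda>\<omega>. G \<omega> = g \<and> D0 \<omega> = e) \<in> sets M" by (intro evt_sets) measurable
  have "prob (evt M (\<lambda>\<omega>. U d \<omega> \<in> B \<and> T \<omega> = t \<and> G \<omega> = g \<and> D0 \<omega> = e)) \<le> prob (evt M (\<lambda>\<omega>. G \<omega> = g \<and> D0 \<omega> = e))"
    using s0 by (intro finite_measure_mono) (auto simp: evt_def)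
  moreover have "prob (evt M (\<lambda>\<omega>. U d \<omega> \<in> B \<and> G \<omega> = g \<and> D0 \<omega> = e)) \<le> prob (evt M (\<lambda>\<omega>. G \<omega> = g \<and> D0 \<omega> = e))"
    using s0 by (intro finite_measure_mono) (auto simp: evt_def)
  moreover have "0 \<le> prob (evt M (\<lambda>\<omega>. U d \<omega> \<in> B \<and> T \<omega> = t \<and> G \<omega> = g \<and> D0 \<omega> = e))"
    "0 \<le> prob (evt M (\<lambda>\<omega>. U d \<omega> \<in> B \<and> G \<omega> = g \<and> D0 \<omega> = e))" by simp_all
  ultimately have "prob (evt M (\<lambda>\<omega>. U d \<omega> \<in> B \<and> T \<omega> = t \<and> G \<omega> = g \<and> D0 \<omega> = e)) = 0"
    "prob (evt M (\<lambda>\<omega>. U d \<omega> \<in> B \<and> G \<omega> = g \<and> D0 \<omega> = e)) = 0" using True by linarith+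
  then show ?thesis by simp
next
  case False
  have "prob (evt M (\<lambda>\<omega>. U d \<omega> \<in> B \<and> T \<omega> = t \<and> G \<omega> = g \<and> D0 \<omega> = e)) * prob (evt M (\<lambda>\<omega>. G \<omega> = g \<and> D0 \<omega> = e))
    = prob (evt M (\<lambda>\<omega>. U d \<omega> \<in> B \<and> G \<omega> = g \<and> D0 \<omega> = e)) * prob (evt M (\<lambda>\<omega>. T \<omega> = t \<and> G \<omega> = g \<and> D0 \<omega> = e))"
    using indU[rule_format, OF d B] .
  also have "evt M (\<lambda>\<omega>. T \<omega> = t \<and> G \<omega> = g \<and> D0 \<omega> = e) = evt M (\<lambda>\<omega>. G \<omega> = g \<and> T \<omega> = t \<and> D0 \<omega> = e)"
    by (auto simp: evt_def)
  finally have "prob (evt M (\<lambda>\<omega>. U d \<omega> \<in> B \<and> T \<omega> = t \<and> G \<omega> = g \<and> D0 \<omega> = e)) * prob (evt M (\<lambda>\<omega>. G \<omega> = g \<and> D0 \<omega> = e))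
    = (prob (evt M (\<lambda>\<omega>. U d \<omega> \<in> B \<and> G \<omega> = g \<and> D0 \<omega> = e)) * Pt t) * prob (evt M (\<lambda>\<omega>. G \<omega> = g \<and> D0 \<omega> = e))"
    unfolding PGD0T by (simp only: mult_ac)
  then show ?thesis using False by (subst (asm) mult_cancel_right) simp
qed

lemma sets_Cg[measurable]: "Cg d g t \<in> sets M" by (intro evt_sets) measurable

lemma Cg0_eq: "Cg d g 0 = evt M (\<lambda>\<omega>. G \<omega> = g \<and> T \<omega> = 0 \<and> D0 \<omega> = real d)"
  by (auto simp: evt_def dobs_def)

lemma cell0_pos: assumes d: "d \<le> 1" and t: "t \<le> 1" shows "0 < prob (cell0 M Dob Gs T (real d) t)"
proof -
  have "real d \<in> {0,1}" using d by auto
  then show ?thesis using H1 t by blast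
qed

lemma exists_cell: assumes d: "d \<le> 1" and t: "t \<le> 1"
  obtains g' where "g' \<le> gbar" "gs g' = 0" "0 < prob (Cg d g' t)"
proof -
  let ?E = "\<lambda>g. evt M (\<lambda>\<omega>. G \<omega> = g \<and> (Dob \<omega> = real d \<and> gs g = 0 \<and> T \<omega> = t))"
  have a: "0 < prob (cell0 M Dob Gs T (real d) t)" using cell0_pos[OF d t] .
  have e: "cell0 M Dob Gs T (real d) t = evt M (\<lambda>\<omega>. (\<lambda>g \<omega>. Dob \<omega> = real d \<and> gs g = 0 \<and> T \<omega> = t) (G \<omega>) \<omega>)"
    unfolding cell0_def Gs_eq ..
  have b: "prob (cell0 M Dob Gs T (real d) t) = (\<Sum>g\<le>gbar. prob (?E g))"
    unfolding e
  proof (rule prob_groups[where P="\<lambda>g \<omega>. Dob \<omega> = real d \<and> gs g = 0 \<and> T \<omega> = t"])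
    fix g
    have "?E g = (if gs g = 0 then Cg d g t else {})" by (auto simp: evt_def)
    then show "?E g \<in> sets M" by simp
  qed
  have "\<exists>g'\<in>{..gbar}. prob (?E g') \<noteq> 0"
  proof (rule ccontr)
    assume "\<not> (\<exists>g'\<in>{..gbar}. prob (?E g') \<noteq> 0)"
    then have "(\<Sum>g\<le>gbar. prob (?E g)) = 0" by (intro sum.neutral) blast
    then show False using a b by simp
  qed
  then obtain g' where g'1: "g' \<le> gbar" and g'2: "prob (?E g') \<noteq> 0" by blast
  have g'3: "gs g' = 0"
  proof (rule ccontr)
    assume "gs g' \<noteq> 0"
    then have "?E g' = {}" by (simp add: evt_def)
    then show False using g'2 by simp
  qed
  have eq: "?E g' = Cg d g' t" using g'3 by (auto simp: evt_def)
  have "0 < prob (Cg d g' t)" using g'2 measure_nonneg[of M "Cg d g' t"] unfolding eq by linarith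
  then show ?thesis using that g'1 g'3 by blast
qed

lemma sets_cellY: "{\<omega> \<in> A. Yob \<omega> \<le> x} \<in> sets M" "{\<omega> \<in> A. x < Yob \<omega> \<and> Yob \<omega> \<le> y} \<in> sets M" if "A \<in> sets M"
proof -
  have "{\<omega> \<in> A. Yob \<omega> \<le> x} = A \<inter> {\<omega> \<in> space M. Yob \<omega> \<le> x}" using sets.sets_into_space[OF that] by auto
  then show "{\<omega> \<in> A. Yob \<omega> \<le> x} \<in> sets M" using that by auto
  have "{\<omega> \<in> A. x < Yob \<omega> \<and> Yob \<omega> \<le> y} = A \<inter> {\<omega> \<in> space M. x < Yob \<omega> \<and> Yob \<omega> \<le> y}" using sets.sets_into_space[OF that] by auto
  then show "{\<omega> \<in> A. x < Yob \<omega> \<and> Yob \<omega> \<le> y} \<in> sets M" using that by auto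
qed

lemma incr_meas: assumes A: "A \<in> sets M" and xy: "x \<le> y"
  shows "prob {\<omega> \<in> A. Yob \<omega> \<le> y} - prob {\<omega> \<in> A. Yob \<omega> \<le> x} = prob {\<omega> \<in> A. x < Yob \<omega> \<and> Yob \<omega> \<le> y}"
proof -
  have "{\<omega> \<in> A. x < Yob \<omega> \<and> Yob \<omega> \<le> y} = {\<omega> \<in> A. Yob \<omega> \<le> y} - {\<omega> \<in> A. Yob \<omega> \<le> x}" by auto
  moreover have "prob ({\<omega> \<in> A. Yob \<omega> \<le> y} - {\<omega> \<in> A. Yob \<omega> \<le> x}) = prob {\<omega> \<in> A. Yob \<omega> \<le> y} - prob {\<omega> \<in> A. Yob \<omega> \<le> x}"
    using sets_cellY(1)[OF A] xy by (intro finite_measure_Diff) auto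
  ultimately show ?thesis by simp
qed

lemma F_strict: assumes d: "d \<le> 1" and t: "t \<le> 1" shows "strict_mono_on S (Ft t d)"
proof -
  obtain g' where g': "g' \<le> gbar" "gs g' = 0" "0 < prob (Cg d g' t)" using exists_cell[OF d t] by blast
  have rd: "real d \<in> {0,1}" using d by auto
  have sm: "strict_mono_on S (ccdf M (Cg d g' t) Yob)" using cells[rule_format, OF rd g'(1) t g'(3)] by simp
  have sub: "Cg d g' t \<subseteq> cell0 M Dob Gs T (real d) t" using g' by (auto simp: evt_def cell0_def Gs_eq)
  have pc: "0 < prob (cell0 M Dob Gs T (real d) t)" using cell0_pos[OF d t] .
  show ?thesis
  proof (rule strict_mono_onI)
    fix x y assume xy: "x \<in> S" "y \<in> S" "x < y"
    have "ccdf M (Cg d g' t) Yob x < ccdf M (Cg d g' t) Yob y" using sm xy by (meson strict_mono_onD)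
    then have "prob {\<omega> \<in> Cg d g' t. Yob \<omega> \<le> x} < prob {\<omega> \<in> Cg d g' t. Yob \<omega> \<le> y}"
      using g'(3) unfolding ccdf_def by (simp add: divide_less_cancel)
    then have "0 < prob {\<omega> \<in> Cg d g' t. x < Yob \<omega> \<and> Yob \<omega> \<le> y}"
      using incr_meas[OF sets_Cg, of x y d g' t] xy by simp
    also have "\<dots> \<le> prob {\<omega> \<in> cell0 M Dob Gs T (real d) t. x < Yob \<omega> \<and> Yob \<omega> \<le> y}"
      using sub sets_cellY(2)[OF sets_cell0] by (intro finite_measure_mono) auto
    also have "\<dots> = prob {\<omega> \<in> cell0 M Dob Gs T (real d) t. Yob \<omega> \<le> y} - prob {\<omega> \<in> cell0 M Dob Gs T (real d) t. Yob \<omega> \<le> x}"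
      using incr_meas[OF sets_cell0, of x y] xy by simp
    finally show "Ft t d x < Ft t d y" using pc unfolding ccdf_def by (simp add: divide_less_cancel)
  qed
qed



definition mu :: "nat \<Rightarrow> real \<Rightarrow> real" where
  "mu d u = (\<Sum>g\<in>K0. prob (evt M (\<lambda>\<omega>. U d \<omega> \<in> {..u} \<and> G \<omega> = g \<and> D0 \<omega> = real d))) / (\<Sum>g\<in>K0. rr g d)"

lemma Yob_cell: assumes "\<omega> \<in> space M" "Gs \<omega> = 0" "T \<omega> = t" "t \<le> 1" "D0 \<omega> = D1 \<omega>" "D0 \<omega> = real d" "d \<le> 1"
  shows "Yob \<omega> = Yd d \<omega>"
proof -
  have Dob: "Dob \<omega> = D0 \<omega>"
  proof (cases "t = 0")
    case True then show ?thesis using assms(3) by (simp add: dobs_def)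
  next
    case False then have "t = 1" using assms(4) by simp
    then show ?thesis using assms(3,5) by (simp add: dobs_def)
  qed
  then have "Yob \<omega> = D0 \<omega> * Y1 \<omega> + (1 - D0 \<omega>) * Y0 \<omega>" by (simp add: yobs_def)
  moreover have "d = 0 \<or> d = 1" using assms(7) by auto
  ultimately show ?thesis using assms(6) by auto
qed

lemma h_mono_iff: assumes "d \<le> 1" "t \<le> 1" shows "h d a t \<le> h d b t \<longleftrightarrow> a \<le> b"
proof -
  have "strict_mono (\<lambda>u. h d u t)" using smh assms by blast
  then show ?thesis using strict_mono_less_eq[of "\<lambda>u. h d u t" a b] by simp
qed

lemma F_h: assumes d: "d \<le> 1" and t: "t \<le> 1" shows "Ft t d (h d u t) = mu d u"
proof -
  let ?Eu = "evt M (\<lambda>\<omega>. U d \<omega> \<in> {..u} \<and> True)"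
  let ?Ey = "evt M (\<lambda>\<omega>. Yob \<omega> \<le> h d u t)"
  have sEu: "?Eu \<in> sets M" using d by (intro evt_XB[OF mUd]) auto
  have sEy: "?Ey \<in> sets M" by (intro evt_sets) measurable
  have n1: "{\<omega> \<in> cell0 M Dob Gs T (real d) t. Yob \<omega> \<le> h d u t} = cell0 M Dob Gs T (real d) t \<inter> ?Ey"
    by (auto simp: cell0_def evt_def)
  have "prob {\<omega> \<in> cell0 M Dob Gs T (real d) t. Yob \<omega> \<le> h d u t} = Ion M (cell0 M Dob Gs T (real d) t) (indicator ?Ey)"
    unfolding n1 by (rule Ion_ind[symmetric]) (auto intro: sEy)
  also have "\<dots> = Ion M (evt M (\<lambda>\<omega>. Gs \<omega> = 0 \<and> T \<omega> = t \<and> D0 \<omega> = real d)) (indicator ?Eu)"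
  proof (rule cell0_AE[OF d t])
    show "indicator ?Ey \<in> borel_measurable M" using sEy by simp
    show "indicator ?Eu \<in> borel_measurable M" using sEu by simp
    fix \<omega> assume w: "\<omega> \<in> space M" "Gs \<omega> = 0" "T \<omega> = t" "D0 \<omega> = D1 \<omega>" "D0 \<omega> = real d"
    have "Yob \<omega> = Yd d \<omega>" using Yob_cell[OF w(1,2,3) t w(4,5) d] .
    also have "\<dots> = h d (U d \<omega>) t" using rep d w(1,3) by auto
    finally have "Yob \<omega> \<le> h d u t \<longleftrightarrow> U d \<omega> \<le> u" using h_mono_iff[OF d t] by simp
    then show "indicator ?Ey \<omega> = (indicator ?Eu \<omega> :: real)" using w(1) by (simp add: evt_def indicator_def)
  qed
  also have "\<dots> = (\<Sum>g\<in>K0. Ion M (evt M (\<lambda>\<omega>. G \<omega> = g \<and> T \<omega> = t \<and> D0 \<omega> = real d)) (indicator ?Eu))"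
    by (rule Ion_Gs_sumD) (intro integrable_real_indicator sEu, simp add: less_top[symmetric])
  also have "\<dots> = (\<Sum>g\<in>K0. prob (evt M (\<lambda>\<omega>. U d \<omega> \<in> {..u} \<and> G \<omega> = g \<and> D0 \<omega> = real d)) * Pt t)"
  proof (intro sum.cong refl)
    fix g
    have "Ion M (evt M (\<lambda>\<omega>. G \<omega> = g \<and> T \<omega> = t \<and> D0 \<omega> = real d)) (indicator ?Eu)
        = prob (evt M (\<lambda>\<omega>. G \<omega> = g \<and> T \<omega> = t \<and> D0 \<omega> = real d) \<inter> ?Eu)"
      by (rule Ion_ind[OF sets_GTD0 sEu])
    also have "evt M (\<lambda>\<omega>. G \<omega> = g \<and> T \<omega> = t \<and> D0 \<omega> = real d) \<inter> ?Eu
        = evt M (\<lambda>\<omega>. U d \<omega> \<in> {..u} \<and> T \<omega> = t \<and> G \<omega> = g \<and> D0 \<omega> = real d)"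
      by (auto simp: evt_def)
    finally show "Ion M (evt M (\<lambda>\<omega>. G \<omega> = g \<and> T \<omega> = t \<and> D0 \<omega> = real d)) (indicator ?Eu)
        = prob (evt M (\<lambda>\<omega>. U d \<omega> \<in> {..u} \<and> G \<omega> = g \<and> D0 \<omega> = real d)) * Pt t"
      using UT[OF d, of "{..u}" t g "real d"] by simp
  qed
  finally have num: "prob {\<omega> \<in> cell0 M Dob Gs T (real d) t. Yob \<omega> \<le> h d u t}
     = (\<Sum>g\<in>K0. prob (evt M (\<lambda>\<omega>. U d \<omega> \<in> {..u} \<and> G \<omega> = g \<and> D0 \<omega> = real d))) * Pt t"
    by (simp add: sum_distrib_right)
  show ?thesis unfolding ccdf_def num cell0_prob[OF d t] mu_def using Pt_pos[OF t] by simp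
qed



lemma AES: "AE \<omega> in M. Yob \<omega> \<in> S"
  using AE_space csupp_AE[OF meas_yobs sets.top] by (rule AE_mp)

lemma quantile: assumes d: "d \<le> 1" and q0: "0 < mu d u" and q1: "mu d u < 1"
  shows "qinv (Ft 1 d) (mu d u) = h d u 1"
proof -
  let ?F = "Ft 1 d" and ?C = "cell0 M Dob Gs T (real d) 1"
  have Fy: "?F (h d u 1) = mu d u" using F_h[OF d, of 1] by simp
  have pC: "0 < prob ?C" using cell0_pos[OF d] by simp
  show ?thesis unfolding qinv_def
  proof (rule cInf_eq_minimum)
    show "h d u 1 \<in> {x. mu d u \<le> ?F x}" using Fy by simp
    fix x assume "x \<in> {x. mu d u \<le> ?F x}"
    then have xq: "mu d u \<le> ?F x" by simp
    show "h d u 1 \<le> x"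
    proof (rule ccontr)
      assume "\<not> h d u 1 \<le> x"
      then have xy: "x < h d u 1" by simp
      have "?F x \<le> ?F (h d u 1)"
        by (rule ccdf_mono) (use xy sets_cellY(1)[OF sets_cell0] in auto)
      then have Fx: "?F x = mu d u" using xq Fy by simp
      have "0 < prob {\<omega> \<in> ?C. Yob \<omega> \<le> x} / prob ?C"
        using Fx q0 unfolding ccdf_def by simp
      then have p1: "0 < prob {\<omega> \<in> ?C. Yob \<omega> \<le> x}"
        using pC by (simp add: zero_less_divide_iff)
      obtain \<omega>1 where w1: "\<omega>1 \<in> {\<omega> \<in> ?C. Yob \<omega> \<le> x}" "Yob \<omega>1 \<in> S"
        using pos_exists[OF sets_cellY(1)[OF sets_cell0] p1 AES] by blast
      have e2: "{\<omega> \<in> ?C. h d u 1 < Yob \<omega>} = ?C - {\<omega> \<in> ?C. Yob \<omega> \<le> h d u 1}" by auto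
      have s2: "{\<omega> \<in> ?C. h d u 1 < Yob \<omega>} \<in> sets M" unfolding e2 using sets_cellY(1)[OF sets_cell0] by auto
      have "prob {\<omega> \<in> ?C. h d u 1 < Yob \<omega>} = prob ?C - prob {\<omega> \<in> ?C. Yob \<omega> \<le> h d u 1}"
        unfolding e2 using sets_cellY(1)[OF sets_cell0] by (intro finite_measure_Diff) auto
      also have "prob {\<omega> \<in> ?C. Yob \<omega> \<le> h d u 1} = mu d u * prob ?C"
        using Fy pC unfolding ccdf_def by (simp add: field_simps)
      finally have eqp: "prob {\<omega> \<in> ?C. h d u 1 < Yob \<omega>} = prob ?C - mu d u * prob ?C" .
      have "mu d u * prob ?C < 1 * prob ?C" by (rule mult_strict_right_mono[OF q1 pC])
      then have p2: "0 < prob {\<omega> \<in> ?C. h d u 1 < Yob \<omega>}" unfolding eqp by linarith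
      obtain \<omega>2 where w2: "\<omega>2 \<in> {\<omega> \<in> ?C. h d u 1 < Yob \<omega>}" "Yob \<omega>2 \<in> S"
        using pos_exists[OF s2 p2 AES] by blast
      have I: "\<And>a b z. a \<in> S \<Longrightarrow> b \<in> S \<Longrightarrow> a \<le> z \<Longrightarrow> z \<le> b \<Longrightarrow> z \<in> S"
        using intS unfolding is_interval_1 by blast
      have a1: "Yob \<omega>1 \<le> x" using w1(1) by simp
      have b1: "h d u 1 < Yob \<omega>2" using w2(1) by simp
      have xS: "x \<in> S" using a1 xy b1 by (intro I[OF w1(2) w2(2)]) auto
      have yS: "h d u 1 \<in> S" using a1 xy b1 by (intro I[OF w1(2) w2(2)]) auto
      have sm: "strict_mono_on S ?F" using F_strict[OF d] by simp
      have "?F x < ?F (h d u 1)" using strict_mono_onD[OF sm xS yS xy] .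
      then show False using Fx Fy by simp
    qed
  qed
qed



lemma ccdf_nonneg: "0 \<le> ccdf M A Y x"
  unfolding ccdf_def by simp

lemma Ft_le1: assumes d: "d \<le> 1" and t: "t \<le> 1" shows "Ft t d x \<le> 1"
proof -
  have "prob {\<omega> \<in> cell0 M Dob Gs T (real d) t. Yob \<omega> \<le> x} \<le> prob (cell0 M Dob Gs T (real d) t)"
    by (intro finite_measure_mono sets_cell0) auto
  then show ?thesis using cell0_pos[OF d t] unfolding ccdf_def by simp
qed

lemma AE_Q: assumes d: "d \<le> 1" and g: "g \<le> gbar" and r: "0 < rr g d"
  shows "AE \<omega> in M. \<omega> \<in> evt M (\<lambda>\<omega>. G \<omega> = g \<and> T \<omega> = 0 \<and> D0 \<omega> = real d)
           \<longrightarrow> Qs M Dob Gs T Yob (Dob \<omega>) (Yob \<omega>) = h d (U d \<omega>) 1"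
proof -
  let ?C = "evt M (\<lambda>\<omega>. G \<omega> = g \<and> T \<omega> = 0 \<and> D0 \<omega> = real d)"
  let ?F0 = "Ft 0 d"
  have CE: "?C = Cg d g 0" using Cg0_eq by simp
  have pC: "0 < prob ?C" unfolding PGD0T using r Pt_pos[of 0] by simp
  have rd: "real d \<in> {0,1}" using d by auto
  have cont: "continuous_on UNIV (ccdf M ?C Yob)"
    using cells[rule_format, OF rd g _ pC[unfolded CE]] unfolding CE by simp
  have sm0: "strict_mono_on S ?F0" using F_strict[OF d] by simp
  define a0 where "a0 = (SOME y. y \<in> S \<and> ?F0 y \<le> 0)"
  define a1 where "a1 = (SOME y. y \<in> S \<and> 1 \<le> ?F0 y)"
  have u0: "y = a0" if y: "y \<in> S" "?F0 y \<le> 0" for y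
  proof -
    have ex: "\<exists>y. y \<in> S \<and> ?F0 y \<le> 0" using y by blast
    have a0: "a0 \<in> S \<and> ?F0 a0 \<le> 0" unfolding a0_def by (rule someI_ex[OF ex])
    show ?thesis
    proof (rule ccontr)
      assume "y \<noteq> a0"
      then have "y < a0 \<or> a0 < y" by auto
      then show False
      proof
        assume lt: "y < a0"
        have "?F0 y < ?F0 a0" by (rule strict_mono_onD[OF sm0]) (use y a0 lt in auto)
        then show False using a0 ccdf_nonneg[of "cell0 M Dob Gs T (real d) 0" Yob y] by linarith
      next
        assume lt: "a0 < y"
        have "?F0 a0 < ?F0 y" by (rule strict_mono_onD[OF sm0]) (use y a0 lt in auto)
        then show False using y ccdf_nonneg[of "cell0 M Dob Gs T (real d) 0" Yob a0] by linarith
      qed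
    qed
  qed
  have u1: "y = a1" if y: "y \<in> S" "1 \<le> ?F0 y" for y
  proof -
    have ex: "\<exists>y. y \<in> S \<and> 1 \<le> ?F0 y" using y by blast
    have a1: "a1 \<in> S \<and> 1 \<le> ?F0 a1" unfolding a1_def by (rule someI_ex[OF ex])
    show ?thesis
    proof (rule ccontr)
      assume "y \<noteq> a1"
      then have "y < a1 \<or> a1 < y" by auto
      then show False
      proof
        assume lt: "y < a1"
        have "?F0 y < ?F0 a1" by (rule strict_mono_onD[OF sm0]) (use y a1 lt in auto)
        then show False using y Ft_le1[OF d, of 0 a1] by linarith
      next
        assume lt: "a1 < y"
        have "?F0 a1 < ?F0 y" by (rule strict_mono_onD[OF sm0]) (use y a1 lt in auto)
        then show False using a1 Ft_le1[OF d, of 0 y] by linarith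
      qed
    qed
  qed
  obtain N1 where N1: "{\<omega> \<in> space M. \<not> Yob \<omega> \<in> S} \<subseteq> N1" "emeasure M N1 = 0" "N1 \<in> sets M"
    using AES by (rule AE_E)
  have sy: "{\<omega> \<in> ?C. Yob \<omega> = a} \<in> sets M" for a
  proof -
    have "{\<omega> \<in> ?C. Yob \<omega> = a} = ?C \<inter> {\<omega> \<in> space M. Yob \<omega> = a}" by (auto simp: evt_def)
    then show ?thesis by simp
  qed
  have n23: "{\<omega> \<in> ?C. Yob \<omega> = a} \<in> null_sets M" for a
    using no_atom[OF sets_GTD0 meas_yobs pC cont, of a] sy[of a] by (simp add: null_sets_def emeasure_eq_measure)
  let ?N = "N1 \<union> {\<omega> \<in> ?C. Yob \<omega> = a0} \<union> {\<omega> \<in> ?C. Yob \<omega> = a1}"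
  have "?N \<in> null_sets M" using N1 n23 by auto
  moreover have "{\<omega> \<in> space M. \<not> (\<omega> \<in> ?C \<longrightarrow> Qs M Dob Gs T Yob (Dob \<omega>) (Yob \<omega>) = h d (U d \<omega>) 1)} \<subseteq> ?N"
  proof
    fix \<omega> assume "\<omega> \<in> {\<omega> \<in> space M. \<not> (\<omega> \<in> ?C \<longrightarrow> Qs M Dob Gs T Yob (Dob \<omega>) (Yob \<omega>) = h d (U d \<omega>) 1)}"
    then have w: "\<omega> \<in> space M" "\<omega> \<in> ?C" and ne: "Qs M Dob Gs T Yob (Dob \<omega>) (Yob \<omega>) \<noteq> h d (U d \<omega>) 1" by auto
    have wc: "G \<omega> = g" "T \<omega> = 0" "D0 \<omega> = real d" using w(2) by (auto simp: evt_def)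
    have Dob: "Dob \<omega> = real d" using wc by (simp add: dobs_def)
    have "Yob \<omega> = Yd d \<omega>"
    proof -
      have "Yob \<omega> = D0 \<omega> * Y1 \<omega> + (1 - D0 \<omega>) * Y0 \<omega>" using wc by (simp add: yobs_def dobs_def)
      moreover have "d = 0 \<or> d = 1" using d by auto
      ultimately show ?thesis using wc(3) by auto
    qed
    also have "\<dots> = h d (U d \<omega>) 0" using rep d w(1) wc(2) by auto
    finally have Yh: "Yob \<omega> = h d (U d \<omega>) 0" .
    have q: "?F0 (Yob \<omega>) = mu d (U d \<omega>)" unfolding Yh using F_h[OF d, of 0] by simp
    have Qe: "Qs M Dob Gs T Yob (Dob \<omega>) (Yob \<omega>) = qinv (Ft 1 d) (mu d (U d \<omega>))"
      unfolding Qs_def Dob using q by simp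
    show "\<omega> \<in> ?N"
    proof (cases "Yob \<omega> \<in> S")
      case False then show ?thesis using N1(1) w(1) by auto
    next
      case True
      have "\<not> (0 < mu d (U d \<omega>) \<and> mu d (U d \<omega>) < 1)"
        using ne quantile[OF d] Qe by auto
      then have "?F0 (Yob \<omega>) \<le> 0 \<or> 1 \<le> ?F0 (Yob \<omega>)" unfolding q by auto
      then have "Yob \<omega> = a0 \<or> Yob \<omega> = a1" using u0 u1 True by blast
      then show ?thesis using w(2) by auto
    qed
  qed
  ultimately show ?thesis by (rule AE_I')
qed



abbreviation "ZQ \<equiv> (\<lambda>\<omega>. Qs M Dob Gs T Yob (Dob \<omega>) (Yob \<omega>))"

lemma int_ZQ_cell: "integrable M (\<lambda>\<omega>. indicator (evt M (\<lambda>\<omega>. G \<omega> = g \<and> T \<omega> = 0 \<and> D0 \<omega> = e)) \<omega> * ZQ \<omega>)"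
proof -
  have "integrable M (\<lambda>\<omega>. indicator (evt M (\<lambda>\<omega>. (G \<omega> = g \<and> D0 \<omega> = e) \<and> T \<omega> = 0)) \<omega> * ZQ \<omega>)"
    by (rule integrable_restrict_evt[OF IQ]) (intro evt_sets, measurable)
  moreover have "evt M (\<lambda>\<omega>. (G \<omega> = g \<and> D0 \<omega> = e) \<and> T \<omega> = 0) = evt M (\<lambda>\<omega>. G \<omega> = g \<and> T \<omega> = 0 \<and> D0 \<omega> = e)"
    by (auto simp: evt_def)
  ultimately show ?thesis by simp
qed

lemma CIC_term: assumes d: "d \<le> 1" and g: "g \<le> gbar"
  shows "Ion M (evt M (\<lambda>\<omega>. G \<omega> = g \<and> T \<omega> = 0 \<and> D0 \<omega> = real d)) ZQ / Pt 0
    = Ion M (evt M (\<lambda>\<omega>. G \<omega> = g \<and> T \<omega> = 1 \<and> D0 \<omega> = real d)) (Yd d) / Pt 1"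
proof (cases "rr g d = 0")
  case True then show ?thesis by (simp add: Ion_GTD0_zero)
next
  case False
  then have r: "0 < rr g d" using measure_nonneg[of M "evt M (\<lambda>\<omega>. G \<omega> = g \<and> D0 \<omega> = real d)"] by linarith
  let ?C0 = "evt M (\<lambda>\<omega>. G \<omega> = g \<and> T \<omega> = 0 \<and> D0 \<omega> = real d)"
  let ?C1 = "evt M (\<lambda>\<omega>. G \<omega> = g \<and> T \<omega> = 1 \<and> D0 \<omega> = real d)"
  have p0: "0 < Pt 0" and p1: "0 < Pt 1" using Pt_pos by auto
  have sm: "strict_mono (\<lambda>u. h d u 1)" using smh d by auto
  have hf: "(\<lambda>u. h d u 1) \<in> borel_measurable borel"
    using sm by (intro borel_measurable_mono) (rule strict_mono_mono)
  have hU: "(\<lambda>\<omega>. h d (U d \<omega>) 1) \<in> borel_measurable M"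
    using measurable_compose[OF mUd[OF d] hf] by simp
  have mZ: "(\<lambda>\<omega>. indicator ?C0 \<omega> * ZQ \<omega>) \<in> borel_measurable M"
    using int_ZQ_cell[of g "real d"] by (rule borel_measurable_integrable)
  have mH: "(\<lambda>\<omega>. indicator ?C0 \<omega> * h d (U d \<omega>) 1) \<in> borel_measurable M"
    using hU by measurable
  obtain N where N: "{\<omega> \<in> space M. \<not> (\<omega> \<in> ?C0 \<longrightarrow> ZQ \<omega> = h d (U d \<omega>) 1)} \<subseteq> N" "emeasure M N = 0" "N \<in> sets M"
    using AE_Q[OF d g r] by (rule AE_E)
  have e1: "Ion M ?C0 ZQ = Ion M ?C0 (\<lambda>\<omega>. h d (U d \<omega>) 1)"
  proof (rule Ion_AE_cong[OF mZ mH])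
    show "N \<in> null_sets M" using N by auto
    fix \<omega> assume "\<omega> \<in> space M" "\<omega> \<notin> N"
    then show "indicator ?C0 \<omega> * ZQ \<omega> = indicator ?C0 \<omega> * h d (U d \<omega>) 1"
      using N(1) by (cases "\<omega> \<in> ?C0") auto
  qed
  have e2: "Ion M ?C0 (\<lambda>\<omega>. h d (U d \<omega>) 1) = (Pt 0 / Pt 1) * Ion M ?C1 (\<lambda>\<omega>. h d (U d \<omega>) 1)"
  proof (rule transfer[OF sets_GTD0 sets_GTD0 mUd[OF d] _ _ hf])
    show "0 \<le> Pt 0 / Pt 1" using p0 p1 by simp
    fix B :: "real set" assume B: "B \<in> sets borel"
    have "?C0 \<inter> (U d -` B \<inter> space M) = evt M (\<lambda>\<omega>. U d \<omega> \<in> B \<and> T \<omega> = 0 \<and> G \<omega> = g \<and> D0 \<omega> = real d)"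
      "?C1 \<inter> (U d -` B \<inter> space M) = evt M (\<lambda>\<omega>. U d \<omega> \<in> B \<and> T \<omega> = 1 \<and> G \<omega> = g \<and> D0 \<omega> = real d)"
      by (auto simp: evt_def)
    then show "prob (?C0 \<inter> (U d -` B \<inter> space M)) = Pt 0 / Pt 1 * prob (?C1 \<inter> (U d -` B \<inter> space M))"
      using UT[OF d B, of 0 g "real d"] UT[OF d B, of 1 g "real d"] p1 by simp
  qed
  have e3: "Ion M ?C1 (\<lambda>\<omega>. h d (U d \<omega>) 1) = Ion M ?C1 (Yd d)"
  proof (rule Ion_cong)
    fix \<omega> assume "\<omega> \<in> space M" "\<omega> \<in> ?C1"
    then show "h d (U d \<omega>) 1 = Yd d \<omega>" using rep d by (auto simp: evt_def)
  qed
  show ?thesis unfolding e1 e2 e3 using p0 p1 by simp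
qed

lemma part3:
  "w10 M Dob Gs T * W_CIC M Dob Gs T Yob 1 + (1 - w10 M Dob Gs T) * W_CIC M Dob Gs T Yob (-1)
     = cexp M (evt M (\<lambda>\<omega>. D0 \<omega> \<noteq> D1 \<omega> \<and> T \<omega> = 1)) Dl"
proof -
  have key: "Ion M (evt M (\<lambda>\<omega>. G \<omega> = g \<and> T \<omega> = 0)) ZQ / Pt 0 = Ion M (evt M (\<lambda>\<omega>. G \<omega> = g \<and> T \<omega> = 1)) YD0 / Pt 1"
    if g: "g \<le> gbar" for g
  proof -
    have U: "evt M (\<lambda>\<omega>. G \<omega> = g \<and> T \<omega> = 0) = evt M (\<lambda>\<omega>. G \<omega> = g \<and> T \<omega> = 0 \<and> D0 \<omega> = 1) \<union> evt M (\<lambda>\<omega>. G \<omega> = g \<and> T \<omega> = 0 \<and> D0 \<omega> = 0)"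
      by (auto simp: evt_def treat_def)
    have "Ion M (evt M (\<lambda>\<omega>. G \<omega> = g \<and> T \<omega> = 0)) ZQ
       = Ion M (evt M (\<lambda>\<omega>. G \<omega> = g \<and> T \<omega> = 0 \<and> D0 \<omega> = 1)) ZQ + Ion M (evt M (\<lambda>\<omega>. G \<omega> = g \<and> T \<omega> = 0 \<and> D0 \<omega> = 0)) ZQ"
      unfolding U by (rule Ion_un2[OF _ int_ZQ_cell int_ZQ_cell]) (auto simp: evt_def)
    then have l: "Ion M (evt M (\<lambda>\<omega>. G \<omega> = g \<and> T \<omega> = 0)) ZQ / Pt 0
       = Ion M (evt M (\<lambda>\<omega>. G \<omega> = g \<and> T \<omega> = 0 \<and> D0 \<omega> = 1)) ZQ / Pt 0 + Ion M (evt M (\<lambda>\<omega>. G \<omega> = g \<and> T \<omega> = 0 \<and> D0 \<omega> = 0)) ZQ / Pt 0"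
      by (simp add: add_divide_distrib)
    have r: "Ion M (evt M (\<lambda>\<omega>. G \<omega> = g \<and> T \<omega> = 1)) YD0 / Pt 1
       = Ion M (evt M (\<lambda>\<omega>. G \<omega> = g \<and> T \<omega> = 1 \<and> D0 \<omega> = 1)) Y1 / Pt 1
       + Ion M (evt M (\<lambda>\<omega>. G \<omega> = g \<and> T \<omega> = 1 \<and> D0 \<omega> = 0)) Y0 / Pt 1"
      unfolding Ion_dsplit[OF int_Y1 int_Y0] by (simp add: add_divide_distrib)
    show ?thesis unfolding l r using CIC_term[OF _ g, of 1] CIC_term[OF _ g, of 0] by simp
  qed
  show ?thesis unfolding W_CIC_def
    by (rule final_TC_like[OF IQ key]) simp
qed


end

theorem theorem4:
  fixes M :: "'a measure"
    and Y0 Y1 V :: "'a \<Rightarrow> real"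
    and G T :: "'a \<Rightarrow> nat"
    and v :: "nat \<Rightarrow> nat \<Rightarrow> real"
    and gbar :: nat
    and U :: "nat \<Rightarrow> 'a \<Rightarrow> real"
    and h :: "nat \<Rightarrow> real \<Rightarrow> nat \<Rightarrow> real"
  defines "D \<equiv> dobs v V G T"
    and "D0 \<equiv> treat v V G 0"
    and "D1 \<equiv> treat v V G 1"
    and "Y \<equiv> yobs (dobs v V G T) Y0 Y1"
    and "Gs \<equiv> gstar M (dobs v V G T) G T"
  assumes prob: "prob_space M"
    and meas_Y0: "Y0 \<in> borel_measurable M" and meas_Y1: "Y1 \<in> borel_measurable M"
    and meas_V: "V \<in> borel_measurable M"
    and meas_G: "G \<in> measurable M (count_space UNIV)"
    and meas_T: "T \<in> measurable M (count_space UNIV)"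
    and int_Y0: "integrable M Y0" and int_Y1: "integrable M Y1"
    and G_range: "\<forall>\<omega>\<in>space M. G \<omega> \<le> gbar"
    and T_range: "\<forall>\<omega>\<in>space M. T \<omega> \<le> 1"
    and cells_pos: "\<forall>g\<le>gbar. \<forall>t\<le>1. 0 < measure M (evt M (\<lambda>\<omega>. G \<omega> = g \<and> T \<omega> = t))"
    (* Assumption 1: V independent of T given G *)
    and A1: "\<forall>B\<in>sets borel. \<forall>g t.
        measure M (evt M (\<lambda>\<omega>. V \<omega> \<in> B \<and> T \<omega> = t \<and> G \<omega> = g)) * measure M (evt M (\<lambda>\<omega>. G \<omega> = g))
      = measure M (evt M (\<lambda>\<omega>. V \<omega> \<in> B \<and> G \<omega> = g)) * measure M (evt M (\<lambda>\<omega>. T \<omega> = t \<and> G \<omega> = g))"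
    (* G_s nonempty *)
    and Gs_ne: "\<exists>g\<le>gbar. EDgt M D G T g 1 = EDgt M D G T g 0"
    (* G independent of T *)
    and GT_indep: "prob_space.indep_var M (count_space UNIV) G (count_space UNIV) T"
    and pos1: "0 < measure M (evt M (\<lambda>\<omega>. Gs \<omega> = 1))"
    and posm1: "0 < measure M (evt M (\<lambda>\<omega>. Gs \<omega> = -1))"
  shows
    "(( \<comment> \<open>Assumption 3\<close>
        (\<forall>g\<le>gbar. \<forall>g'\<le>gbar.
           cexp M (evt M (\<lambda>\<omega>. G \<omega> = g \<and> T \<omega> = 1)) Y0 - cexp M (evt M (\<lambda>\<omega>. G \<omega> = g \<and> T \<omega> = 0)) Y0
         = cexp M (evt M (\<lambda>\<omega>. G \<omega> = g' \<and> T \<omega> = 1)) Y0 - cexp M (evt M (\<lambda>\<omega>. G \<omega> = g' \<and> T \<omega> = 0)) Y0)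
      \<and> \<comment> \<open>Assumption 4\<close>
        (\<forall>g\<le>gbar.
           cexp M (evt M (\<lambda>\<omega>. G \<omega> = g \<and> T \<omega> = 1 \<and> D0 \<omega> = 1)) (\<lambda>\<omega>. Y1 \<omega> - Y0 \<omega>)
         = cexp M (evt M (\<lambda>\<omega>. G \<omega> = g \<and> T \<omega> = 0 \<and> D0 \<omega> = 1)) (\<lambda>\<omega>. Y1 \<omega> - Y0 \<omega>)))
      \<longrightarrow> w10 M D Gs T * W_DID M D Gs T Y 1 0 + (1 - w10 M D Gs T) * W_DID M D Gs T Y (-1) 0
          = cexp M (evt M (\<lambda>\<omega>. D0 \<omega> \<noteq> D1 \<omega> \<and> T \<omega> = 1)) (\<lambda>\<omega>. Y1 \<omega> - Y0 \<omega>))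
   \<and> (( \<comment> \<open>well-definedness of delta*_d\<close>
        (\<forall>d\<in>{0,1}. \<forall>t\<le>1. 0 < measure M (cell0 M D Gs T d t))
      \<and> \<comment> \<open>Assumption 3'\<close>
        (\<forall>d\<in>{0::nat,1}. \<forall>g\<le>gbar. \<forall>g'\<le>gbar.
           0 < measure M (evt M (\<lambda>\<omega>. G \<omega> = g \<and> D0 \<omega> = real d)) \<longrightarrow>
           0 < measure M (evt M (\<lambda>\<omega>. G \<omega> = g' \<and> D0 \<omega> = real d)) \<longrightarrow>
           cexp M (evt M (\<lambda>\<omega>. G \<omega> = g \<and> T \<omega> = 1 \<and> D0 \<omega> = real d)) (if d = 0 then Y0 else Y1)
             - cexp M (evt M (\<lambda>\<omega>. G \<omega> = g \<and> T \<omega> = 0 \<and> D0 \<omega> = real d)) (if d = 0 then Y0 else Y1)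
         = cexp M (evt M (\<lambda>\<omega>. G \<omega> = g' \<and> T \<omega> = 1 \<and> D0 \<omega> = real d)) (if d = 0 then Y0 else Y1)
             - cexp M (evt M (\<lambda>\<omega>. G \<omega> = g' \<and> T \<omega> = 0 \<and> D0 \<omega> = real d)) (if d = 0 then Y0 else Y1)))
      \<longrightarrow> w10 M D Gs T * W_TC M D Gs T Y 1 + (1 - w10 M D Gs T) * W_TC M D Gs T Y (-1)
          = cexp M (evt M (\<lambda>\<omega>. D0 \<omega> \<noteq> D1 \<omega> \<and> T \<omega> = 1)) (\<lambda>\<omega>. Y1 \<omega> - Y0 \<omega>))
   \<and> (( \<comment> \<open>well-definedness of Q*_d and finiteness of E(Q*_D(Y) | G*=g, T=0)\<close>
        (\<forall>d\<in>{0,1}. \<forall>t\<le>1. 0 < measure M (cell0 M D Gs T d t))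
      \<and> integrable M (\<lambda>\<omega>. indicator (evt M (\<lambda>\<omega>. T \<omega> = 0)) \<omega> * Qs M D Gs T Y (D \<omega>) (Y \<omega>))
      \<and> \<comment> \<open>Assumption 6\<close>
        (\<forall>d\<le>1. U d \<in> borel_measurable M)
      \<and> (\<forall>d\<le>1. \<forall>\<omega>\<in>space M. (if d = 0 then Y0 \<omega> else Y1 \<omega>) = h d (U d \<omega>) (T \<omega>))
      \<and> (\<forall>d\<le>1. \<forall>t\<le>1. strict_mono (\<lambda>u. h d u t))
      \<and> (\<forall>d\<le>1. \<forall>B\<in>sets borel. \<forall>g t e.
           measure M (evt M (\<lambda>\<omega>. U d \<omega> \<in> B \<and> T \<omega> = t \<and> G \<omega> = g \<and> D0 \<omega> = e))
             * measure M (evt M (\<lambda>\<omega>. G \<omega> = g \<and> D0 \<omega> = e))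
         = measure M (evt M (\<lambda>\<omega>. U d \<omega> \<in> B \<and> G \<omega> = g \<and> D0 \<omega> = e))
             * measure M (evt M (\<lambda>\<omega>. T \<omega> = t \<and> G \<omega> = g \<and> D0 \<omega> = e)))
      \<and> \<comment> \<open>Assumption 7\<close>
        closed (csupp M (space M) Y) \<and> is_interval (csupp M (space M) Y)
      \<and> (\<forall>d\<in>{0,1}. \<forall>g\<le>gbar. \<forall>t\<le>1.
           0 < measure M (evt M (\<lambda>\<omega>. D \<omega> = d \<and> G \<omega> = g \<and> T \<omega> = t)) \<longrightarrow>
             csupp M (evt M (\<lambda>\<omega>. D \<omega> = d \<and> G \<omega> = g \<and> T \<omega> = t)) Y = csupp M (space M) Y
           \<and> continuous_on UNIV (ccdf M (evt M (\<lambda>\<omega>. D \<omega> = d \<and> G \<omega> = g \<and> T \<omega> = t)) Y)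
           \<and> strict_mono_on (csupp M (space M) Y)
               (ccdf M (evt M (\<lambda>\<omega>. D \<omega> = d \<and> G \<omega> = g \<and> T \<omega> = t)) Y)))
      \<longrightarrow> w10 M D Gs T * W_CIC M D Gs T Y 1 + (1 - w10 M D Gs T) * W_CIC M D Gs T Y (-1)
          = cexp M (evt M (\<lambda>\<omega>. D0 \<omega> \<noteq> D1 \<omega> \<and> T \<omega> = 1)) (\<lambda>\<omega>. Y1 \<omega> - Y0 \<omega>))"
  proof -
  have loc: "T4 M Y0 Y1 V G T v gbar"
    unfolding T4_def T4_axioms_def
    using prob meas_Y0 meas_Y1 meas_V meas_G meas_T int_Y0 int_Y1 G_range T_range cells_pos A1 GT_indep
      Gs_ne pos1 posm1
    unfolding D_def Gs_def by (intro conjI) auto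
  interpret T4 M Y0 Y1 V G T v gbar by (rule loc)
  show ?thesis
    unfolding D_def D0_def D1_def Y_def Gs_def
    apply (intro conjI impI)
      apply (elim conjE, rule part1; assumption)
     apply (elim conjE, rule part2; assumption)
    apply (rule T4c.part3[of M Y0 Y1 V G T v gbar U h])
    apply (unfold T4c_def T4c_axioms_def)
    apply (elim conjE)
    apply (intro conjI loc)
    apply assumption+
    done
qed

end
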